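(* Let $f \in \mathcal{C}_{2\pi}$, let $A_n[f]$ be the Toeplitz matrix generated by $f$ and $c_n[f]$ the optimal circulant preconditioner for $A_n[f]$. Assume that $\sin c_n[f]$ is invertible for every $n$ and that there is a constant $C$ with $\|(\sin c_n[f])^{-1}\|_2\le C$ for all $n$. Then for every $\epsilon>0$ there exist positive integers $N$ and $M$ such that for every $n>N$ there are matrices $\widehat{\mathcal R}_n[f],\widehat{\mathcal E}_n[f]\in\mathbb{C}^{n\times n}$ with \[ (\sin c_n[f])^{-1}\sin A_n[f] = I_n+\widehat{\mathcal R}_n[f]+\widehat{\mathcal E}_n[f],\qquad \operatorname{rank}\widehat{\mathcal R}_n[f]\le 2M,\qquad \|\widehat{\mathcal E}_n[f]\|_2\le\epsilon. \]
   Context: $\mathcal{C}_{2\pi}$ denotes the Banach space of all $2\pi$-periodic continuous complex-valued functions on $\mathbb{R}$ with the supremum norm $\|\cdot\|_\infty$. For $f\in\mathcal{C}_{2\pi}$ its Fourier coefficients are $a_k=\frac{1}{2\pi}\int_{-\pi}^{\pi} f(\theta)e^{-\mathbf{i}k\theta}\,d\theta$, $k\in\mathbb{Z}$. The Toeplitz matrix generated by $f$ is the $n\times n$ matrix $A_n[f]$ whose $(j,k)$ entry is $a_{j-k}$. The optimal circulant preconditioner $c_n[f]$ is the $n\times n$ circulant matrix whose $(j,k)$ entry is $c_{(j-k)\bmod n}$, where $c_k=\frac{(n-k)a_k+k\,a_{k-n}}{n}$ for $0\le k<n$. For a square matrix $X$, $\sin X=\sum_{m\ge0}\frac{(-1)^m}{(2m+1)!}X^{2m+1}$.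 $I_n$ is the $n\times n$ identity and $\|\cdot\|_2$ is the spectral norm. *)

theory Defs
  imports "HOL-Analysis.Analysis" "Jordan_Normal_Form.DL_Rank"
begin

definition fourier_coeff :: "(real \<Rightarrow> complex) \<Rightarrow> int \<Rightarrow> complex" where
  "fourier_coeff f k = (1 / (2 * of_real pi)) *
     integral {-pi..pi} (\<lambda>\<theta>. f \<theta> * exp (- \<i> * of_int k * of_real \<theta>))"

definition toeplitz_mat :: "(real \<Rightarrow> complex) \<Rightarrow> nat \<Rightarrow> complex mat" where
  "toeplitz_mat f n = mat n n (\<lambda>(j, k). fourier_coeff f (int j - int k))"

definition opt_circ_coeff :: "(real \<Rightarrow> complex) \<Rightarrow> nat \<Rightarrow> int \<Rightarrow> complex" where
  "opt_circ_coeff f n k = ((of_int (int n - k)) * fourier_coeff f k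
                           + of_int k * fourier_coeff f (k - int n)) / of_nat n"

definition opt_circ :: "(real \<Rightarrow> complex) \<Rightarrow> nat \<Rightarrow> complex mat" where
  "opt_circ f n = mat n n (\<lambda>(j, k). opt_circ_coeff f n ((int j - int k) mod int n))"

definition mat_sin :: "complex mat \<Rightarrow> complex mat" where
  "mat_sin X = mat (dim_row X) (dim_col X)
     (\<lambda>(i, j). \<Sum>m. ((-1) ^ m / of_nat (fact (2 * m + 1))) * ((X ^\<^sub>m (2 * m + 1)) $$ (i, j)))"

text \<open>The (two-sided) inverse of a square matrix (meaningful when it is invertible).\<close>
definition mat_inv :: "complex mat \<Rightarrow> complex mat" where
  "mat_inv A = (SOME B. B \<in> carrier_mat (dim_row A) (dim_row A) \<and> A * B = 1\<^sub>m (dim_row A)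
                       \<and> B * A = 1\<^sub>m (dim_row A))"

definition cvec_norm :: "complex vec \<Rightarrow> real" where
  "cvec_norm v = sqrt (\<Sum>i<dim_vec v. (cmod (v $ i))\<^sup>2)"

definition spec_norm :: "complex mat \<Rightarrow> real" where
  "spec_norm A = Sup {cvec_norm (A *\<^sub>v v) | v. v \<in> carrier_vec (dim_col A) \<and> cvec_norm v \<le> 1}"

definition cmat_rank :: "complex mat \<Rightarrow> nat" where
  "cmat_rank A = vec_space.rank (dim_row A) (A :: complex mat)"

end

theory Submission
  imports Defs
begin

no_notation Finite_Cartesian_Product.vec.vec_nth (infixl \<open>$\<close> 90)

lemma mv_index: "A \<in> carrier_mat n m \<Longrightarrow> v \<in> carrier_vec m \<Longrightarrow> i < n \<Longrightarrow>
   (A *\<^sub>v v) $ i = (\<Sum>j<m. A $$ (i,j) * v $ j)"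
  by (auto simp: scalar_prod_def row_def lessThan_atLeast0 intro!: sum.cong)

lemma cvec_norm_L2: "cvec_norm v = L2_set (\<lambda>i. cmod (v $ i)) {..<dim_vec v}"
  by (simp add: cvec_norm_def L2_set_def)

lemma cvec_norm_nonneg[simp]: "0 \<le> cvec_norm v"
  unfolding cvec_norm_L2 by (rule L2_set_nonneg)

lemma cvec_norm_zero[simp]: "cvec_norm (0\<^sub>v n) = 0"
  by (simp add: cvec_norm_def)

lemma cvec_norm_entry: "i < dim_vec v \<Longrightarrow> cmod (v $ i) \<le> cvec_norm v"
  unfolding cvec_norm_L2 by (rule member_le_L2_set) auto

lemma cvec_norm_le_sum: "cvec_norm v \<le> (\<Sum>i<dim_vec v. cmod (v $ i))"
  unfolding cvec_norm_L2 by (rule L2_set_le_sum) auto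

lemma cvec_norm_smult: "cvec_norm (c \<cdot>\<^sub>v v) = cmod c * cvec_norm v"
proof -
  have "cvec_norm (c \<cdot>\<^sub>v v) = L2_set (\<lambda>i. cmod c * cmod (v $ i)) {..<dim_vec v}"
    unfolding cvec_norm_L2 by (auto simp: norm_mult intro!: L2_set_cong)
  also have "\<dots> = cmod c * cvec_norm v"
    unfolding cvec_norm_L2 by (simp add: L2_set_right_distrib)
  finally show ?thesis .
qed

lemma cvec_norm_add: "dim_vec v = dim_vec w \<Longrightarrow> cvec_norm (v + w) \<le> cvec_norm v + cvec_norm w"
proof -
  assume d: "dim_vec v = dim_vec w"
  have "cvec_norm (v + w) \<le> L2_set (\<lambda>i. cmod (v $ i) + cmod (w $ i)) {..<dim_vec v}"
    unfolding cvec_norm_L2 using d by (auto intro!: L2_set_mono norm_triangle_ineq)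
  also have "\<dots> \<le> cvec_norm v + cvec_norm w"
    unfolding cvec_norm_L2 using d by (simp add: L2_set_triangle_ineq)
  finally show ?thesis .
qed

lemma cvec_norm_eq0: "cvec_norm v = 0 \<Longrightarrow> v = 0\<^sub>v (dim_vec v)"
proof (rule eq_vecI)
  fix i assume "cvec_norm v = 0" "i < dim_vec (0\<^sub>v (dim_vec v))"
  then show "v $ i = 0\<^sub>v (dim_vec v) $ i"
    using cvec_norm_entry[of i v] by auto
qed auto

definition nb :: "complex mat \<Rightarrow> real \<Rightarrow> bool" where
  "nb A b \<longleftrightarrow> (\<forall>v \<in> carrier_vec (dim_col A). cvec_norm (A *\<^sub>v v) \<le> b * cvec_norm v)"

lemma nbD: "nb A b \<Longrightarrow> v \<in> carrier_vec (dim_col A) \<Longrightarrow> cvec_norm (A *\<^sub>v v) \<le> b * cvec_norm v"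
  by (simp add: nb_def)

lemma nbI: "(\<And>v. v \<in> carrier_vec (dim_col A) \<Longrightarrow> cvec_norm (A *\<^sub>v v) \<le> b * cvec_norm v) \<Longrightarrow> nb A b"
  by (simp add: nb_def)

lemma nb_mono: "nb A a \<Longrightarrow> a \<le> b \<Longrightarrow> nb A b"
  unfolding nb_def by (meson cvec_norm_nonneg mult_right_mono order_trans)

lemma nb_crude:
  assumes A: "A \<in> carrier_mat n m"
  shows "nb A (\<Sum>i<n. \<Sum>j<m. cmod (A $$ (i,j)))"
proof (rule nbI)
  fix v :: "complex vec" assume v: "v \<in> carrier_vec (dim_col A)"
  hence v': "v \<in> carrier_vec m" using A by auto
  have "cvec_norm (A *\<^sub>v v) \<le> (\<Sum>i<n. cmod ((A *\<^sub>v v) $ i))"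
    using cvec_norm_le_sum[of "A *\<^sub>v v"] A by auto
  also have "\<dots> \<le> (\<Sum>i<n. \<Sum>j<m. cmod (A $$ (i,j)) * cvec_norm v)"
  proof (rule sum_mono)
    fix i assume i: "i \<in> {..<n}"
    have "cmod ((A *\<^sub>v v) $ i) = cmod (\<Sum>j<m. A $$ (i,j) * v $ j)"
      using mv_index[OF A v'] i by auto
    also have "\<dots> \<le> (\<Sum>j<m. cmod (A $$ (i,j) * v $ j))" by (rule norm_sum)
    also have "\<dots> \<le> (\<Sum>j<m. cmod (A $$ (i,j)) * cvec_norm v)"
      using v' by (auto simp: norm_mult intro!: sum_mono mult_left_mono cvec_norm_entry)
    finally show "cmod ((A *\<^sub>v v) $ i) \<le> (\<Sum>j<m. cmod (A $$ (i,j)) * cvec_norm v)" .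
  qed
  also have "\<dots> = (\<Sum>i<n. \<Sum>j<m. cmod (A $$ (i,j))) * cvec_norm v"
    by (simp add: sum_distrib_right)
  finally show "cvec_norm (A *\<^sub>v v) \<le> (\<Sum>i<n. \<Sum>j<m. cmod (A $$ (i,j))) * cvec_norm v" .
qed

lemma nb_exists: "\<exists>b\<ge>0. nb A b"
proof -
  have "A \<in> carrier_mat (dim_row A) (dim_col A)" by auto
  from nb_crude[OF this] show ?thesis by (intro exI[of _ "\<Sum>i<dim_row A. \<Sum>j<dim_col A. cmod (A $$ (i,j))"]) (auto intro!: sum_nonneg)
qed

lemma spec_norm_set_bdd: "bdd_above {cvec_norm (A *\<^sub>v v) | v. v \<in> carrier_vec (dim_col A) \<and> cvec_norm v \<le> 1}"
proof -
  obtain b where b: "b \<ge> 0" "nb A b" using nb_exists by blast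
  show ?thesis
  proof (rule bdd_aboveI[of _ b], safe)
    fix v :: "complex vec" assume "v \<in> carrier_vec (dim_col A)" "cvec_norm v \<le> 1"
    then show "cvec_norm (A *\<^sub>v v) \<le> b" using nbD[OF b(2)] b(1)
      by (meson mult_left_le order_trans)
  qed
qed

lemma spec_norm_le: assumes "nb A b" "0 \<le> b" shows "spec_norm A \<le> b"
  unfolding spec_norm_def
proof (rule cSup_least)
  show "{cvec_norm (A *\<^sub>v v) | v. v \<in> carrier_vec (dim_col A) \<and> cvec_norm v \<le> 1} \<noteq> {}"
  proof -
    have "cvec_norm (A *\<^sub>v 0\<^sub>v (dim_col A)) \<in> {cvec_norm (A *\<^sub>v v) | v. v \<in> carrier_vec (dim_col A) \<and> cvec_norm v \<le> 1}" by auto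
    then show ?thesis by blast
  qed
next
  fix x assume "x \<in> {cvec_norm (A *\<^sub>v v) | v. v \<in> carrier_vec (dim_col A) \<and> cvec_norm v \<le> 1}"
  then obtain v where "x = cvec_norm (A *\<^sub>v v)" "v \<in> carrier_vec (dim_col A)" "cvec_norm v \<le> 1" by auto
  then show "x \<le> b" using nbD[OF assms(1)] assms(2) by (meson mult_left_le order_trans)
qed

lemma mult_mat_vec_smult: "v \<in> carrier_vec (dim_col A) \<Longrightarrow> (A :: complex mat) *\<^sub>v (c \<cdot>\<^sub>v v) = c \<cdot>\<^sub>v (A *\<^sub>v v)"
  by (rule eq_vecI) auto

lemma mat_vec_zero[simp]: "A *\<^sub>v 0\<^sub>v (dim_col A) = 0\<^sub>v (dim_row A)"
  by (rule eq_vecI) (auto simp: scalar_prod_def)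

lemma nb_spec_norm: "nb A (spec_norm A)"
proof (rule nbI)
  fix v :: "complex vec" assume v: "v \<in> carrier_vec (dim_col A)"
  show "cvec_norm (A *\<^sub>v v) \<le> spec_norm A * cvec_norm v"
  proof (cases "cvec_norm v = 0")
    case True
    then have "v = 0\<^sub>v (dim_col A)" using cvec_norm_eq0[of v] v by auto
    then show ?thesis using True by auto
  next
    case False
    define u where "u = (1 / complex_of_real (cvec_norm v)) \<cdot>\<^sub>v v"
    have nu: "cvec_norm u = 1" using False unfolding u_def cvec_norm_smult
      by (simp add: norm_divide)
    have "cvec_norm (A *\<^sub>v u) \<le> spec_norm A" unfolding spec_norm_def
      by (rule cSup_upper[OF _ spec_norm_set_bdd]) (use v nu in \<open>auto simp: u_def\<close>)
    moreover have "cvec_norm (A *\<^sub>v u) = cvec_norm (A *\<^sub>v v) / cvec_norm v"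
      unfolding u_def mult_mat_vec_smult[OF v] cvec_norm_smult using False by (simp add: norm_divide)
    ultimately have "cvec_norm (A *\<^sub>v v) / cvec_norm v \<le> spec_norm A" by simp
    moreover have "cvec_norm v > 0" using False cvec_norm_nonneg[of v] by linarith
    ultimately show ?thesis by (simp add: pos_divide_le_eq)
  qed
qed

lemma spec_norm_nonneg: "0 \<le> spec_norm A"
proof -
  have "cvec_norm (A *\<^sub>v 0\<^sub>v (dim_col A)) \<le> spec_norm A" unfolding spec_norm_def
    by (rule cSup_upper[OF _ spec_norm_set_bdd], rule CollectI, rule exI[of _ "0\<^sub>v (dim_col A)"]) auto
  then show ?thesis by simp
qed

lemma nb_add: assumes "A \<in> carrier_mat n m" "B \<in> carrier_mat n m" "nb A a" "nb B b"
  shows "nb (A + B) (a + b)"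
proof (rule nbI)
  fix v :: "complex vec" assume v: "v \<in> carrier_vec (dim_col (A + B))"
  hence v': "v \<in> carrier_vec m" using assms by auto
  have "(A + B) *\<^sub>v v = A *\<^sub>v v + B *\<^sub>v v" by (rule add_mult_distrib_mat_vec[OF assms(1,2) v'])
  then have "cvec_norm ((A + B) *\<^sub>v v) \<le> cvec_norm (A *\<^sub>v v) + cvec_norm (B *\<^sub>v v)"
    using cvec_norm_add[of "A *\<^sub>v v" "B *\<^sub>v v"] assms by auto
  also have "\<dots> \<le> a * cvec_norm v + b * cvec_norm v"
    using nbD[OF assms(3)] nbD[OF assms(4)] assms v' by (auto intro: add_mono)
  finally show "cvec_norm ((A + B) *\<^sub>v v) \<le> (a + b) * cvec_norm v" by (simp add: algebra_simps)
qed

lemma nb_mult: assumes "A \<in> carrier_mat n m" "B \<in> carrier_mat m k" "nb A a" "nb B b" "0 \<le> a"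
  shows "nb (A * B) (a * b)"
proof (rule nbI)
  fix v :: "complex vec" assume v: "v \<in> carrier_vec (dim_col (A * B))"
  have dA: "dim_row A = n" "dim_col A = m" using assms(1) by auto
  have dB: "dim_row B = m" "dim_col B = k" using assms(2) by auto
  have v': "v \<in> carrier_vec k" using v dB by simp
  have e: "(A * B) *\<^sub>v v = A *\<^sub>v (B *\<^sub>v v)" by (rule assoc_mult_mat_vec[OF assms(1,2) v'])
  have Bv: "B *\<^sub>v v \<in> carrier_vec (dim_col A)" unfolding carrier_vec_def using dA dB by simp
  have 1: "cvec_norm (A *\<^sub>v (B *\<^sub>v v)) \<le> a * cvec_norm (B *\<^sub>v v)"
    by (rule nbD[OF assms(3) Bv])
  have 2: "cvec_norm (B *\<^sub>v v) \<le> b * cvec_norm v"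
    by (rule nbD[OF assms(4)]) (use v' dB in simp)
  have "cvec_norm ((A * B) *\<^sub>v v) \<le> a * (b * cvec_norm v)"
    unfolding e using 1 mult_left_mono[OF 2 assms(5)] by linarith
  then show "cvec_norm ((A * B) *\<^sub>v v) \<le> (a * b) * cvec_norm v" by (simp add: mult.assoc)
qed

lemma nb_smult: assumes "nb A a" shows "nb (c \<cdot>\<^sub>m A) (cmod c * a)"
proof (rule nbI)
  fix v :: "complex vec" assume v: "v \<in> carrier_vec (dim_col (c \<cdot>\<^sub>m A))"
  have "(c \<cdot>\<^sub>m A) *\<^sub>v v = c \<cdot>\<^sub>v (A *\<^sub>v v)"
  proof (rule eq_vecI)
    fix i assume "i < dim_vec (c \<cdot>\<^sub>v (A *\<^sub>v v))"
    then show "((c \<cdot>\<^sub>m A) *\<^sub>v v) $ i = (c \<cdot>\<^sub>v (A *\<^sub>v v)) $ i"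
      using mv_index[of A "dim_row A" "dim_col A" v i] mv_index[of "c \<cdot>\<^sub>m A" "dim_row A" "dim_col A" v i] v
      by (auto simp: sum_distrib_left mult.assoc)
  qed auto
  then show "cvec_norm ((c \<cdot>\<^sub>m A) *\<^sub>v v) \<le> cmod c * a * cvec_norm v"
    using nbD[OF assms, of v] v by (auto simp: cvec_norm_smult mult.assoc intro: mult_left_mono)
qed

lemma nb_one: "nb (1\<^sub>m n) 1"
proof (rule nbI)
  fix v :: "complex vec" assume "v \<in> carrier_vec (dim_col (1\<^sub>m n :: complex mat))"
  then have "v \<in> carrier_vec n" by simp
  then have "1\<^sub>m n *\<^sub>v v = v" by (rule one_mult_mat_vec)
  then show "cvec_norm (1\<^sub>m n *\<^sub>v v) \<le> 1 * cvec_norm v" by simp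
qed

lemma nb_zero: "nb (0\<^sub>m n m) 0"
proof (rule nbI)
  fix v :: "complex vec" assume "v \<in> carrier_vec (dim_col (0\<^sub>m n m))"
  moreover have "0\<^sub>m n m *\<^sub>v v = 0\<^sub>v n" using calculation by (intro eq_vecI) (auto simp: scalar_prod_def)
  ultimately show "cvec_norm (0\<^sub>m n m *\<^sub>v v) \<le> 0 * cvec_norm v" by simp
qed

lemma nb_pow: assumes "A \<in> carrier_mat n n" "nb A a" "0 \<le> a" shows "nb (A ^\<^sub>m k) (a ^ k)"
proof (induction k)
  case 0 then show ?case using nb_one by simp
next
  case (Suc k)
  have "nb (A ^\<^sub>m k * A) (a ^ k * a)"
    by (rule nb_mult[OF _ assms(1) Suc assms(2)]) (use assms in auto)
  then show ?case by (simp add: mult.commute)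
qed

lemma cvec_norm_unit: "j < m \<Longrightarrow> cvec_norm (unit_vec m j) = 1"
proof -
  assume j: "j < m"
  have "(\<Sum>i<m. (cmod (unit_vec m j $ i))\<^sup>2) = (\<Sum>i<m. if i = j then 1 else 0)"
    using j by (intro sum.cong) auto
  also have "\<dots> = 1" using j by simp
  finally show ?thesis by (simp add: cvec_norm_def)
qed

lemma nb_entry: assumes A: "A \<in> carrier_mat n m" "nb A a" "i < n" "j < m"
  shows "cmod (A $$ (i,j)) \<le> a"
proof -
  have "(A *\<^sub>v unit_vec m j) $ i = (\<Sum>k<m. A $$ (i,k) * unit_vec m j $ k)"
    using mv_index[OF A(1) _ A(3)] by auto
  also have "\<dots> = (\<Sum>k<m. if k = j then A $$ (i,j) else 0)"
    using A(4) by (intro sum.cong) auto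
  also have "\<dots> = A $$ (i,j)" using A(4) by simp
  finally have e: "(A *\<^sub>v unit_vec m j) $ i = A $$ (i,j)" .
  have "cmod (A $$ (i,j)) \<le> cvec_norm (A *\<^sub>v unit_vec m j)"
    using cvec_norm_entry[of i "A *\<^sub>v unit_vec m j"] e A by auto
  also have "\<dots> \<le> a * cvec_norm (unit_vec m j)" using nbD[OF A(2)] A by auto
  finally show ?thesis using cvec_norm_unit[OF A(4)] by simp
qed

lemma nb_closed: assumes "\<And>d. d > 0 \<Longrightarrow> nb A (b + d)" shows "nb A b"
proof (rule nbI)
  fix v :: "complex vec" assume v: "v \<in> carrier_vec (dim_col A)"
  show "cvec_norm (A *\<^sub>v v) \<le> b * cvec_norm v"
  proof (rule field_le_epsilon)
    fix e :: real assume e: "0 < e"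
    define d where "d = e / (cvec_norm v + 1)"
    have pos: "cvec_norm v + 1 > 0" using cvec_norm_nonneg[of v] by linarith
    then have d: "d > 0" using e unfolding d_def by (intro divide_pos_pos)
    have "cvec_norm (A *\<^sub>v v) \<le> (b + d) * cvec_norm v" using nbD[OF assms[OF d] v] .
    also have "\<dots> = b * cvec_norm v + d * cvec_norm v" by (simp add: algebra_simps)
    also have "d * cvec_norm v \<le> e" unfolding d_def using e pos
      by (simp add: divide_le_eq pos_divide_le_eq)
    finally show "cvec_norm (A *\<^sub>v v) \<le> b * cvec_norm v + e" by simp
  qed
qed

lemma cvec_norm_sq: "(cvec_norm v)\<^sup>2 = (\<Sum>i<dim_vec v. (cmod (v $ i))\<^sup>2)"
  unfolding cvec_norm_def by (simp add: sum_nonneg)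

lemma nb_schur:
  assumes A: "A \<in> carrier_mat n n" and r: "0 \<le> r"
    and rows: "\<And>i. i < n \<Longrightarrow> (\<Sum>j<n. cmod (A $$ (i,j))) \<le> r"
    and cols: "\<And>j. j < n \<Longrightarrow> (\<Sum>i<n. cmod (A $$ (i,j))) \<le> r"
  shows "nb A r"
proof (rule nbI)
  fix v :: "complex vec" assume v0: "v \<in> carrier_vec (dim_col A)"
  have v: "v \<in> carrier_vec n" using v0 A by simp
  have dv: "dim_vec v = n" using v by simp
  have dAv: "dim_vec (A *\<^sub>v v) = n" using A by simp
  have step: "(cmod ((A *\<^sub>v v) $ i))\<^sup>2 \<le> r * (\<Sum>j<n. cmod (A $$ (i,j)) * (cmod (v $ j))\<^sup>2)" if i: "i < n" for i
  proof -
    have "cmod ((A *\<^sub>v v) $ i) \<le> (\<Sum>j<n. cmod (A $$ (i,j)) * cmod (v $ j))"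
      unfolding mv_index[OF A v i] by (rule order_trans[OF norm_sum]) (simp add: norm_mult)
    also have "\<dots> = (\<Sum>j<n. sqrt (cmod (A $$ (i,j))) * (sqrt (cmod (A $$ (i,j))) * cmod (v $ j)))"
      by (rule sum.cong) (auto simp: mult.assoc[symmetric])
    finally have 1: "cmod ((A *\<^sub>v v) $ i) \<le> \<dots>" .
    have "(cmod ((A *\<^sub>v v) $ i))\<^sup>2 \<le> (\<Sum>j<n. sqrt (cmod (A $$ (i,j))) * (sqrt (cmod (A $$ (i,j))) * cmod (v $ j)))\<^sup>2"
      by (rule power_mono[OF 1]) simp
    also have "\<dots> \<le> (\<Sum>j<n. (sqrt (cmod (A $$ (i,j))))\<^sup>2) * (\<Sum>j<n. (sqrt (cmod (A $$ (i,j))) * cmod (v $ j))\<^sup>2)"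
      by (rule Cauchy_Schwarz_ineq_sum)
    also have "\<dots> = (\<Sum>j<n. cmod (A $$ (i,j))) * (\<Sum>j<n. cmod (A $$ (i,j)) * (cmod (v $ j))\<^sup>2)"
      by (simp add: power_mult_distrib)
    also have "\<dots> \<le> r * (\<Sum>j<n. cmod (A $$ (i,j)) * (cmod (v $ j))\<^sup>2)"
      by (rule mult_right_mono[OF rows[OF i]]) (auto intro!: sum_nonneg)
    finally show ?thesis .
  qed
  have "(cvec_norm (A *\<^sub>v v))\<^sup>2 = (\<Sum>i<n. (cmod ((A *\<^sub>v v) $ i))\<^sup>2)"
    unfolding cvec_norm_sq dAv ..
  also have "\<dots> \<le> (\<Sum>i<n. r * (\<Sum>j<n. cmod (A $$ (i,j)) * (cmod (v $ j))\<^sup>2))"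
    by (rule sum_mono) (rule step, simp)
  also have "\<dots> = r * (\<Sum>i<n. \<Sum>j<n. cmod (A $$ (i,j)) * (cmod (v $ j))\<^sup>2)"
    by (simp add: sum_distrib_left)
  also have "\<dots> = r * (\<Sum>j<n. \<Sum>i<n. cmod (A $$ (i,j)) * (cmod (v $ j))\<^sup>2)"
    by (subst sum.swap) (rule refl)
  also have "\<dots> = r * (\<Sum>j<n. (\<Sum>i<n. cmod (A $$ (i,j))) * (cmod (v $ j))\<^sup>2)"
    by (simp add: sum_distrib_right)
  also have "\<dots> \<le> r * (\<Sum>j<n. r * (cmod (v $ j))\<^sup>2)"
  proof (rule mult_left_mono[OF _ r], rule sum_mono)
    fix j assume "j \<in> {..<n}"
    then show "(\<Sum>i<n. cmod (A $$ (i,j))) * (cmod (v $ j))\<^sup>2 \<le> r * (cmod (v $ j))\<^sup>2"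
      by (intro mult_right_mono cols) auto
  qed
  also have "\<dots> = (r * cvec_norm v)\<^sup>2"
    unfolding power_mult_distrib cvec_norm_sq dv by (simp add: sum_distrib_left power2_eq_square mult.assoc)
  finally have "(cvec_norm (A *\<^sub>v v))\<^sup>2 \<le> (r * cvec_norm v)\<^sup>2" .
  then show "cvec_norm (A *\<^sub>v v) \<le> r * cvec_norm v"
    by (rule power2_le_imp_le) (simp add: r)
qed

definition outer :: "nat \<Rightarrow> (nat \<Rightarrow> complex) \<Rightarrow> (nat \<Rightarrow> complex) \<Rightarrow> complex mat" where
  "outer n u w = mat n n (\<lambda>(i,j). u i * w j)"

fun osum :: "nat \<Rightarrow> ((nat \<Rightarrow> complex) \<times> (nat \<Rightarrow> complex)) list \<Rightarrow> complex mat" where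
  "osum n [] = 0\<^sub>m n n"
| "osum n (p # ps) = outer n (fst p) (snd p) + osum n ps"

lemma outer_carrier[simp]: "outer n u w \<in> carrier_mat n n"
  by (simp add: outer_def)

lemma osum_carrier[simp]: "osum n ps \<in> carrier_mat n n"
  by (induction ps) auto

lemma osum_dims[simp]: "dim_row (osum n ps) = n" "dim_col (osum n ps) = n"
  using osum_carrier[of n ps] by (auto simp del: osum_carrier)

lemma osum_index: "i < n \<Longrightarrow> j < n \<Longrightarrow> osum n ps $$ (i,j) = (\<Sum>p\<leftarrow>ps. fst p i * snd p j)"
  by (induction ps) (auto simp: outer_def simp del: osum.simps(2) simp add: osum.simps(2)[of n])

lemma osum_append: "osum n (ps @ qs) = osum n ps + osum n qs"
  by (rule eq_matI) (auto simp: osum_index)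

lemma osum_mult_left: assumes W: "W \<in> carrier_mat n n"
  shows "W * osum n ps = osum n (map (\<lambda>p. (\<lambda>i. \<Sum>k<n. W $$ (i,k) * fst p k, snd p)) ps)"
proof (rule eq_matI)
  fix i j assume ij: "i < dim_row (osum n (map (\<lambda>p. (\<lambda>i. \<Sum>k<n. W $$ (i,k) * fst p k, snd p)) ps))"
     "j < dim_col (osum n (map (\<lambda>p. (\<lambda>i. \<Sum>k<n. W $$ (i,k) * fst p k, snd p)) ps))"
  then have i: "i < n" and j: "j < n" by auto
  have "(W * osum n ps) $$ (i,j) = (\<Sum>k<n. W $$ (i,k) * osum n ps $$ (k,j))"
    using W i j by (auto simp: scalar_prod_def lessThan_atLeast0 intro!: sum.cong)
  also have "\<dots> = (\<Sum>k<n. W $$ (i,k) * (\<Sum>p\<leftarrow>ps. fst p k * snd p j))"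
    using j by (intro sum.cong) (auto simp: osum_index)
  also have "\<dots> = (\<Sum>p\<leftarrow>ps. (\<Sum>k<n. W $$ (i,k) * fst p k) * snd p j)"
    by (induction ps) (auto simp: algebra_simps sum.distrib sum_distrib_left sum_distrib_right)
  also have "\<dots> = osum n (map (\<lambda>p. (\<lambda>i. \<Sum>k<n. W $$ (i,k) * fst p k, snd p)) ps) $$ (i,j)"
    using i j by (simp add: osum_index o_def)
  finally show "(W * osum n ps) $$ (i,j) = \<dots>" .
qed (use W in auto)

lemma osum_mult_right: assumes W: "W \<in> carrier_mat n n"
  shows "osum n ps * W = osum n (map (\<lambda>p. (fst p, \<lambda>j. \<Sum>k<n. snd p k * W $$ (k,j))) ps)"
proof (rule eq_matI)
  fix i j assume ij: "i < dim_row (osum n (map (\<lambda>p. (fst p, \<lambda>j. \<Sum>k<n. snd p k * W $$ (k,j))) ps))"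
     "j < dim_col (osum n (map (\<lambda>p. (fst p, \<lambda>j. \<Sum>k<n. snd p k * W $$ (k,j))) ps))"
  then have i: "i < n" and j: "j < n" by auto
  have "(osum n ps * W) $$ (i,j) = (\<Sum>k<n. osum n ps $$ (i,k) * W $$ (k,j))"
    using W i j by (auto simp: scalar_prod_def lessThan_atLeast0 intro!: sum.cong)
  also have "\<dots> = (\<Sum>k<n. (\<Sum>p\<leftarrow>ps. fst p i * snd p k) * W $$ (k,j))"
    using i by (intro sum.cong) (auto simp: osum_index)
  also have "\<dots> = (\<Sum>p\<leftarrow>ps. fst p i * (\<Sum>k<n. snd p k * W $$ (k,j)))"
    by (induction ps) (auto simp: algebra_simps sum.distrib sum_distrib_left sum_distrib_right)
  also have "\<dots> = osum n (map (\<lambda>p. (fst p, \<lambda>j. \<Sum>k<n. snd p k * W $$ (k,j))) ps) $$ (i,j)"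
    using i j by (simp add: osum_index o_def)
  finally show "(osum n ps * W) $$ (i,j) = \<dots>" .
qed (use W in auto)

lemma osum_smult: "c \<cdot>\<^sub>m osum n ps = osum n (map (\<lambda>p. (\<lambda>i. c * fst p i, snd p)) ps)"
proof (rule eq_matI)
  fix i j assume "i < dim_row (osum n (map (\<lambda>p. (\<lambda>i. c * fst p i, snd p)) ps))"
    "j < dim_col (osum n (map (\<lambda>p. (\<lambda>i. c * fst p i, snd p)) ps))"
  then have i: "i < n" and j: "j < n" by auto
  show "(c \<cdot>\<^sub>m osum n ps) $$ (i,j) = osum n (map (\<lambda>p. (\<lambda>i. c * fst p i, snd p)) ps) $$ (i,j)"
    using i j by (simp add: osum_index o_def sum_list_const_mult[symmetric] mult.assoc)
qed auto

lemma rank_outer: "vec_space.rank n (outer n u w) \<le> 1"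
  by (rule vec_space.rank_le_1_product_entries[of _ n, where f = u and g = w]) (auto simp: outer_def)

lemma rank_osum: "vec_space.rank n (osum n ps) \<le> length ps"
proof (induction ps)
  case Nil then show ?case by (simp add: vec_space.rank_0I)
next
  case (Cons p ps)
  have "vec_space.rank n (osum n (p # ps)) \<le> vec_space.rank n (outer n (fst p) (snd p)) + vec_space.rank n (osum n ps)"
    by (simp, rule vec_space.rank_subadditive[OF outer_carrier osum_carrier])
  then show ?case using Cons rank_outer[of n "fst p" "snd p"] by simp
qed

definition lowrank :: "nat \<Rightarrow> nat \<Rightarrow> complex mat \<Rightarrow> bool" where
  "lowrank n k R \<longleftrightarrow> (\<exists>ps. length ps \<le> k \<and> R = osum n ps)"

lemma lowrank_carrier: "lowrank n k R \<Longrightarrow> R \<in> carrier_mat n n"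
  unfolding lowrank_def by auto

lemma lowrank_rank: "lowrank n k R \<Longrightarrow> cmat_rank R \<le> k"
  unfolding lowrank_def cmat_rank_def by (auto intro: order_trans[OF rank_osum])

lemma lowrank_add: assumes R: "lowrank n k R" and S: "lowrank n l S" shows "lowrank n (k + l) (R + S)"
proof -
  obtain ps where ps: "length ps \<le> k" "R = osum n ps" using R unfolding lowrank_def by blast
  obtain qs where qs: "length qs \<le> l" "S = osum n qs" using S unfolding lowrank_def by blast
  show ?thesis unfolding lowrank_def ps(2) qs(2) osum_append[symmetric]
    by (rule exI, rule conjI[OF _ refl]) (simp add: ps(1) qs(1) add_mono)
qed

lemma lowrank_mono: "lowrank n k R \<Longrightarrow> k \<le> l \<Longrightarrow> lowrank n l R"
  unfolding lowrank_def using le_trans by blast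

lemma lowrank_zero: "lowrank n 0 (0\<^sub>m n n)"
  unfolding lowrank_def by (intro exI[of _ "[]"]) auto

lemma lowrank_mult_left: assumes W: "W \<in> carrier_mat n n" and R: "lowrank n k R" shows "lowrank n k (W * R)"
proof -
  obtain ps where ps: "length ps \<le> k" "R = osum n ps" using R unfolding lowrank_def by blast
  show ?thesis unfolding lowrank_def ps(2) osum_mult_left[OF W]
    by (rule exI, rule conjI[OF _ refl]) (simp add: ps(1))
qed

lemma lowrank_mult_right: assumes W: "W \<in> carrier_mat n n" and R: "lowrank n k R" shows "lowrank n k (R * W)"
proof -
  obtain ps where ps: "length ps \<le> k" "R = osum n ps" using R unfolding lowrank_def by blast
  show ?thesis unfolding lowrank_def ps(2) osum_mult_right[OF W]
    by (rule exI, rule conjI[OF _ refl]) (simp add: ps(1))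
qed

lemma lowrank_smult: assumes R: "lowrank n k R" shows "lowrank n k (c \<cdot>\<^sub>m R)"
proof -
  obtain ps where ps: "length ps \<le> k" "R = osum n ps" using R unfolding lowrank_def by blast
  show ?thesis unfolding lowrank_def ps(2) osum_smult
    by (rule exI, rule conjI[OF _ refl]) (simp add: ps(1))
qed

definition ex :: "int \<Rightarrow> real \<Rightarrow> complex" where
  "ex m \<theta> = exp (\<i> * of_int m * of_real \<theta>)"

lemma continuous_on_ex: "continuous_on S (ex m)"
  unfolding ex_def by (intro continuous_intros)

lemma ex_add: "ex a \<theta> * ex b \<theta> = ex (a + b) \<theta>"
  unfolding ex_def by (simp add: exp_add[symmetric] algebra_simps)

lemma cnj_ex: "cnj (ex a \<theta>) = ex (- a) \<theta>"
  unfolding ex_def by (simp add: exp_cnj)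

lemma ex_has_integral: "(ex m has_integral (if m = 0 then of_real (2 * pi) else 0)) {-pi..pi}"
proof (cases "m = 0")
  case True
  have "((\<lambda>x. complex_of_real x) has_vector_derivative 1) (at x within {-pi..pi})" for x
    using has_vector_derivative_real_field[of "\<lambda>z. z" 1 x "{-pi..pi}"] by (auto intro: derivative_eq_intros)
  from fundamental_theorem_of_calculus[of "-pi" pi "\<lambda>x. complex_of_real x" "\<lambda>_. 1", OF _ this]
  have "((\<lambda>_. 1) has_integral complex_of_real pi - complex_of_real (-pi)) {-pi..pi}" by simp
  moreover have "ex m = (\<lambda>_. 1)" using True by (auto simp: ex_def)
  ultimately show ?thesis using True by simp
next
  case False
  define c where "c = \<i> * of_int m"
  have c: "c \<noteq> 0" using False by (simp add: c_def)
  have d: "((\<lambda>z. exp (c * z) / c) has_field_derivative exp (c * z)) (at z)" for z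
  proof -
    show ?thesis by (rule derivative_eq_intros refl | simp add: c)+
  qed
  have "((\<lambda>x. exp (c * of_real x) / c) has_vector_derivative exp (c * of_real x)) (at x within {-pi..pi})" for x
    by (rule has_vector_derivative_real_field[OF d])
  from fundamental_theorem_of_calculus[of "-pi" pi "\<lambda>x. exp (c * of_real x) / c" "\<lambda>x. exp (c * of_real x)", OF _ this]
  have 1: "((\<lambda>x. exp (c * of_real x)) has_integral exp (c * of_real pi) / c - exp (c * of_real (-pi)) / c) {-pi..pi}"
    by simp
  have "exp (c * of_real pi) = exp (c * of_real (- pi) + \<i> * (of_int m * (of_real pi * 2)))"
    by (rule arg_cong[where f = exp]) (simp add: c_def algebra_simps)
  also have "\<dots> = exp (c * of_real (-pi))" by (rule exp_plus_2pin)
  finally have 2: "exp (c * of_real pi) / c - exp (c * of_real (-pi)) / c = 0" by simp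
  have "ex m = (\<lambda>x. exp (c * of_real x))" by (auto simp: ex_def c_def)
  moreover have "((\<lambda>x. exp (c * of_real x)) has_integral 0) {-pi..pi}" using 1 by (simp only: 2)
  ultimately show ?thesis using False by simp
qed

lemma fourier_coeff_ex: "fourier_coeff f k = (1 / (2 * of_real pi)) * integral {-pi..pi} (\<lambda>\<theta>. f \<theta> * ex (- k) \<theta>)"
  unfolding fourier_coeff_def ex_def by simp

lemma fourier_has_integral:
  assumes "continuous_on {-pi..pi} f"
  shows "((\<lambda>\<theta>. f \<theta> * ex (- k) \<theta>) has_integral (2 * of_real pi) * fourier_coeff f k) {-pi..pi}"
proof -
  have "(\<lambda>\<theta>. f \<theta> * ex (- k) \<theta>) integrable_on {-pi..pi}"
    by (intro integrable_continuous_real continuous_intros assms continuous_on_ex)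
  then show ?thesis unfolding fourier_coeff_ex by (simp add: has_integral_integral)
qed

lemma fourier_coeff_diff:
  assumes "continuous_on {-pi..pi} f" "continuous_on {-pi..pi} g"
  shows "fourier_coeff (\<lambda>\<theta>. f \<theta> - g \<theta>) k = fourier_coeff f k - fourier_coeff g k"
proof -
  have "((\<lambda>\<theta>. (f \<theta> - g \<theta>) * ex (- k) \<theta>) has_integral (2 * of_real pi) * fourier_coeff f k - (2 * of_real pi) * fourier_coeff g k) {-pi..pi}"
    using has_integral_diff[OF fourier_has_integral[OF assms(1)] fourier_has_integral[OF assms(2)]]
    by (simp add: algebra_simps)
  then have "integral {-pi..pi} (\<lambda>\<theta>. (f \<theta> - g \<theta>) * ex (- k) \<theta>) = (2 * of_real pi) * (fourier_coeff f k - fourier_coeff g k)"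
    by (simp add: integral_unique algebra_simps)
  then show ?thesis unfolding fourier_coeff_ex[of "\<lambda>\<theta>. f \<theta> - g \<theta>"] by simp
qed

definition tpoly :: "(complex \<times> int) list \<Rightarrow> real \<Rightarrow> complex" where
  "tpoly ps \<theta> = (\<Sum>p\<leftarrow>ps. fst p * ex (snd p) \<theta>)"

lemma tpoly_Nil[simp]: "tpoly [] \<theta> = 0" by (simp add: tpoly_def)
lemma tpoly_Cons[simp]: "tpoly (p # ps) \<theta> = fst p * ex (snd p) \<theta> + tpoly ps \<theta>" by (simp add: tpoly_def)
lemma tpoly_append: "tpoly (ps @ qs) \<theta> = tpoly ps \<theta> + tpoly qs \<theta>" by (simp add: tpoly_def)

lemma continuous_on_tpoly: "continuous_on S (tpoly ps)"
proof (induction ps)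
  case Nil then show ?case by (simp add: tpoly_def)
next
  case (Cons p ps)
  have "tpoly (p # ps) = (\<lambda>\<theta>. fst p * ex (snd p) \<theta> + tpoly ps \<theta>)" by auto
  then show ?case using Cons continuous_on_ex by (auto intro!: continuous_intros)
qed

lemma fourier_coeff_tpoly: "fourier_coeff (tpoly ps) k = (\<Sum>p\<leftarrow>ps. if snd p = k then fst p else 0)"
proof -
  have "((\<lambda>\<theta>. tpoly ps \<theta> * ex (- k) \<theta>) has_integral (2 * of_real pi) * (\<Sum>p\<leftarrow>ps. if snd p = k then fst p else 0)) {-pi..pi}"
  proof (induction ps)
    case Nil then show ?case by simp
  next
    case (Cons p ps)
    have e: "(\<lambda>\<theta>. tpoly (p # ps) \<theta> * ex (- k) \<theta>) = (\<lambda>\<theta>. fst p * ex (snd p - k) \<theta> + tpoly ps \<theta> * ex (- k) \<theta>)"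
    proof (rule ext)
      fix \<theta>
      have "ex (snd p) \<theta> * ex (- k) \<theta> = ex (snd p - k) \<theta>" using ex_add[of "snd p" \<theta> "-k"] by simp
      then show "tpoly (p # ps) \<theta> * ex (- k) \<theta> = fst p * ex (snd p - k) \<theta> + tpoly ps \<theta> * ex (- k) \<theta>"
        by (simp add: algebra_simps)
    qed
    have "(ex (snd p - k) has_integral (if snd p = k then of_real (2 * pi) else 0)) {-pi..pi}"
      using ex_has_integral[of "snd p - k"] by simp
    then have "((\<lambda>\<theta>. fst p * ex (snd p - k) \<theta>) has_integral fst p * (if snd p = k then of_real (2 * pi) else 0)) {-pi..pi}"
      by (rule has_integral_mult_right)
    from has_integral_add[OF this Cons.IH] show ?case unfolding e by (auto simp: algebra_simps)
  qed
  then show ?thesis unfolding fourier_coeff_ex by (simp add: integral_unique)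
qed

lemma ex_mult_cnj: "ex a \<theta> * cnj (ex b \<theta>) = ex (a - b) \<theta>"
  using ex_add[of a \<theta> "-b"] by (simp add: cnj_ex)

lemma ortho_sum:
  "((\<lambda>\<theta>. (\<Sum>j<n. \<alpha> j * ex (int j) \<theta>) * cnj (\<Sum>k<n. \<beta> k * ex (int k) \<theta>)) has_integral
     of_real (2 * pi) * (\<Sum>j<n. \<alpha> j * cnj (\<beta> j))) {-pi..pi}"
proof -
  have e: "(\<Sum>j<n. \<alpha> j * ex (int j) \<theta>) * cnj (\<Sum>k<n. \<beta> k * ex (int k) \<theta>) =
        (\<Sum>j<n. \<Sum>k<n. (\<alpha> j * cnj (\<beta> k)) * ex (int j - int k) \<theta>)" for \<theta>
  proof -
    have "(\<Sum>j<n. \<alpha> j * ex (int j) \<theta>) * cnj (\<Sum>k<n. \<beta> k * ex (int k) \<theta>) =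
          (\<Sum>j<n. \<alpha> j * ex (int j) \<theta>) * (\<Sum>k<n. cnj (\<beta> k) * cnj (ex (int k) \<theta>))"
      by (simp add: cnj_sum)
    also have "\<dots> = (\<Sum>j<n. \<Sum>k<n. (\<alpha> j * ex (int j) \<theta>) * (cnj (\<beta> k) * cnj (ex (int k) \<theta>)))"
      by (rule sum_product)
    also have "\<dots> = (\<Sum>j<n. \<Sum>k<n. (\<alpha> j * cnj (\<beta> k)) * ex (int j - int k) \<theta>)"
    proof (intro sum.cong refl)
      fix j k
      show "(\<alpha> j * ex (int j) \<theta>) * (cnj (\<beta> k) * cnj (ex (int k) \<theta>)) = (\<alpha> j * cnj (\<beta> k)) * ex (int j - int k) \<theta>"
        using ex_mult_cnj[of "int j" \<theta> "int k"] by (simp add: algebra_simps)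
    qed
    finally show ?thesis .
  qed
  have "((\<lambda>\<theta>. \<Sum>j<n. \<Sum>k<n. (\<alpha> j * cnj (\<beta> k)) * ex (int j - int k) \<theta>) has_integral
          (\<Sum>j<n. \<Sum>k<n. (\<alpha> j * cnj (\<beta> k)) * (if int j - int k = 0 then of_real (2 * pi) else 0))) {-pi..pi}"
    by (intro has_integral_sum finite_lessThan has_integral_mult_right ex_has_integral)
  moreover have "(\<Sum>j<n. \<Sum>k<n. (\<alpha> j * cnj (\<beta> k)) * (if int j - int k = 0 then of_real (2 * pi) else 0)) =
       of_real (2 * pi) * (\<Sum>j<n. \<alpha> j * cnj (\<beta> j))"
  proof -
    have "(\<Sum>j<n. \<Sum>k<n. (\<alpha> j * cnj (\<beta> k)) * (if int j - int k = 0 then of_real (2 * pi) else 0)) =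
          (\<Sum>j<n. \<Sum>k<n. if k = j then (\<alpha> j * cnj (\<beta> j)) * of_real (2 * pi) else 0)"
      by (intro sum.cong refl) auto
    also have "\<dots> = (\<Sum>j<n. (\<alpha> j * cnj (\<beta> j)) * of_real (2 * pi))"
      by (intro sum.cong refl) (simp add: sum.delta)
    finally show ?thesis by (simp add: sum_distrib_left mult.commute)
  qed
  ultimately show ?thesis unfolding e by simp
qed

lemma toeplitz_index: "j < n \<Longrightarrow> k < n \<Longrightarrow> toeplitz_mat g n $$ (j,k) = fourier_coeff g (int j - int k)"
  by (simp add: toeplitz_mat_def)

lemma toeplitz_carrier[simp]: "toeplitz_mat g n \<in> carrier_mat n n"
  by (simp add: toeplitz_mat_def)

lemma toeplitz_dims[simp]: "dim_row (toeplitz_mat g n) = n" "dim_col (toeplitz_mat g n) = n"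
  by (simp_all add: toeplitz_mat_def)

lemma toeplitz_form:
  assumes g: "continuous_on {-pi..pi} g" and v: "v \<in> carrier_vec n" and w: "w \<in> carrier_vec n"
  shows "((\<lambda>\<theta>. g \<theta> * ((\<Sum>k<n. v $ k * ex (int k) \<theta>) * cnj (\<Sum>j<n. w $ j * ex (int j) \<theta>))) has_integral
     of_real (2 * pi) * (\<Sum>j<n. cnj (w $ j) * (toeplitz_mat g n *\<^sub>v v) $ j)) {-pi..pi}"
proof -
  have e: "g \<theta> * ((\<Sum>k<n. v $ k * ex (int k) \<theta>) * cnj (\<Sum>j<n. w $ j * ex (int j) \<theta>)) =
     (\<Sum>j<n. \<Sum>k<n. (cnj (w $ j) * v $ k) * (g \<theta> * ex (- (int j - int k)) \<theta>))" for \<theta>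
  proof -
    have "(\<Sum>k<n. v $ k * ex (int k) \<theta>) * cnj (\<Sum>j<n. w $ j * ex (int j) \<theta>) =
          (\<Sum>k<n. \<Sum>j<n. (v $ k * cnj (w $ j)) * ex (int k - int j) \<theta>)"
    proof -
      have "(\<Sum>k<n. v $ k * ex (int k) \<theta>) * cnj (\<Sum>j<n. w $ j * ex (int j) \<theta>) =
            (\<Sum>k<n. v $ k * ex (int k) \<theta>) * (\<Sum>j<n. cnj (w $ j) * cnj (ex (int j) \<theta>))"
        by (simp add: cnj_sum)
      also have "\<dots> = (\<Sum>k<n. \<Sum>j<n. (v $ k * ex (int k) \<theta>) * (cnj (w $ j) * cnj (ex (int j) \<theta>)))"
        by (rule sum_product)
      also have "\<dots> = (\<Sum>k<n. \<Sum>j<n. (v $ k * cnj (w $ j)) * ex (int k - int j) \<theta>)"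
      proof (intro sum.cong refl)
        fix j k
        show "(v $ k * ex (int k) \<theta>) * (cnj (w $ j) * cnj (ex (int j) \<theta>)) = (v $ k * cnj (w $ j)) * ex (int k - int j) \<theta>"
          using ex_mult_cnj[of "int k" \<theta> "int j"] by (simp add: algebra_simps)
      qed
      finally show ?thesis .
    qed
    also have "\<dots> = (\<Sum>j<n. \<Sum>k<n. (v $ k * cnj (w $ j)) * ex (int k - int j) \<theta>)"
      by (rule sum.swap)
    finally have 1: "(\<Sum>k<n. v $ k * ex (int k) \<theta>) * cnj (\<Sum>j<n. w $ j * ex (int j) \<theta>) =
        (\<Sum>j<n. \<Sum>k<n. (v $ k * cnj (w $ j)) * ex (int k - int j) \<theta>)" .
    show ?thesis unfolding 1 sum_distrib_left
      by (intro sum.cong refl) (simp add: algebra_simps)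
  qed
  have "((\<lambda>\<theta>. \<Sum>j<n. \<Sum>k<n. (cnj (w $ j) * v $ k) * (g \<theta> * ex (- (int j - int k)) \<theta>)) has_integral
      (\<Sum>j<n. \<Sum>k<n. (cnj (w $ j) * v $ k) * ((2 * of_real pi) * fourier_coeff g (int j - int k)))) {-pi..pi}"
    by (intro has_integral_sum finite_lessThan has_integral_mult_right fourier_has_integral g)
  moreover have "(\<Sum>j<n. \<Sum>k<n. (cnj (w $ j) * v $ k) * ((2 * of_real pi) * fourier_coeff g (int j - int k))) =
     of_real (2 * pi) * (\<Sum>j<n. cnj (w $ j) * (toeplitz_mat g n *\<^sub>v v) $ j)"
  proof -
    have "(\<Sum>j<n. cnj (w $ j) * (toeplitz_mat g n *\<^sub>v v) $ j) =
        (\<Sum>j<n. \<Sum>k<n. (cnj (w $ j) * v $ k) * fourier_coeff g (int j - int k))"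
    proof (intro sum.cong refl)
      fix j assume j: "j \<in> {..<n}"
      have "(toeplitz_mat g n *\<^sub>v v) $ j = (\<Sum>k<n. fourier_coeff g (int j - int k) * v $ k)"
        using mv_index[OF toeplitz_carrier v] j by (simp add: toeplitz_index)
      then show "cnj (w $ j) * (toeplitz_mat g n *\<^sub>v v) $ j = (\<Sum>k<n. (cnj (w $ j) * v $ k) * fourier_coeff g (int j - int k))"
        by (simp add: sum_distrib_left algebra_simps)
    qed
    then show ?thesis by (simp add: sum_distrib_left algebra_simps)
  qed
  ultimately show ?thesis unfolding e by simp
qed

lemma amgm: fixes p q t :: real assumes t: "0 < t" shows "p * q \<le> (t * q\<^sup>2 + p\<^sup>2 / t) / 2"
proof -
  have "0 \<le> (t * q - p)\<^sup>2" by simp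
  then have 1: "2 * t * (p * q) \<le> t * (t * q\<^sup>2) + p\<^sup>2" by (simp add: power2_eq_square algebra_simps)
  have 2: "t * (t * q\<^sup>2 + p\<^sup>2 / t) = t * (t * q\<^sup>2) + p\<^sup>2" using t by (simp add: distrib_left)
  have "t * (2 * (p * q)) \<le> t * (t * q\<^sup>2 + p\<^sup>2 / t)" using 1 2 by (simp add: mult.assoc mult.left_commute)
  then have "2 * (p * q) \<le> t * q\<^sup>2 + p\<^sup>2 / t" using t by (simp add: mult_le_cancel_left_pos)
  then show ?thesis by simp
qed

lemma mult_cnj_self: "z * cnj z = complex_of_real ((cmod z)\<^sup>2)"
  by (metis complex_norm_square)

lemma sum_cnj_self: "(\<Sum>j<n. cnj (w $ j) * w $ j) = of_real ((cvec_norm w)\<^sup>2)" if "dim_vec w = n"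
proof -
  have "(\<Sum>j<n. cnj (w $ j) * w $ j) = (\<Sum>j<n. of_real ((cmod (w $ j))\<^sup>2))"
    by (intro sum.cong refl) (metis mult_cnj_self mult.commute)
  then show ?thesis using that by (simp add: cvec_norm_sq)
qed

lemma sum_self_cnj: "(\<Sum>j<n. w $ j * cnj (w $ j)) = of_real ((cvec_norm w)\<^sup>2)" if "dim_vec w = n"
  using sum_cnj_self[OF that] by (simp add: mult.commute)

lemma parseval_real:
  assumes "dim_vec v = n"
  shows "((\<lambda>\<theta>. (cmod (\<Sum>j<n. v $ j * ex (int j) \<theta>))\<^sup>2) has_integral 2 * pi * (cvec_norm v)\<^sup>2) {-pi..pi}"
proof -
  have "((\<lambda>\<theta>. (\<Sum>j<n. v $ j * ex (int j) \<theta>) * cnj (\<Sum>k<n. v $ k * ex (int k) \<theta>)) has_integral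
     of_real (2 * pi) * (\<Sum>j<n. v $ j * cnj (v $ j))) {-pi..pi}"
    by (rule ortho_sum)
  from has_integral_linear[OF this bounded_linear_Re]
  have "((Re \<circ> (\<lambda>\<theta>. (\<Sum>j<n. v $ j * ex (int j) \<theta>) * cnj (\<Sum>k<n. v $ k * ex (int k) \<theta>))) has_integral
     Re (of_real (2 * pi) * (\<Sum>j<n. v $ j * cnj (v $ j)))) {-pi..pi}" .
  moreover have "Re \<circ> (\<lambda>\<theta>. (\<Sum>j<n. v $ j * ex (int j) \<theta>) * cnj (\<Sum>k<n. v $ k * ex (int k) \<theta>)) =
     (\<lambda>\<theta>. (cmod (\<Sum>j<n. v $ j * ex (int j) \<theta>))\<^sup>2)"
    by (rule ext) (simp only: o_def mult_cnj_self Re_complex_of_real)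
  moreover have "Re (of_real (2 * pi) * (\<Sum>j<n. v $ j * cnj (v $ j))) = 2 * pi * (cvec_norm v)\<^sup>2"
    using sum_self_cnj[OF assms] by simp
  ultimately show ?thesis by simp
qed

lemma toeplitz_nb:
  assumes g: "continuous_on {-pi..pi} g" and bd: "\<And>\<theta>. \<theta> \<in> {-pi..pi} \<Longrightarrow> cmod (g \<theta>) \<le> \<delta>"
  shows "nb (toeplitz_mat g n) \<delta>"
proof (rule nbI)
  have "cmod (g 0) \<le> \<delta>" using bd[of 0] pi_ge_zero by simp
  then have d0: "0 \<le> \<delta>" by (meson norm_ge_zero order_trans)
  fix v :: "complex vec" assume v0: "v \<in> carrier_vec (dim_col (toeplitz_mat g n))"
  have v: "v \<in> carrier_vec n" using v0 by simp
  define w where "w = toeplitz_mat g n *\<^sub>v v"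
  have w: "w \<in> carrier_vec n" unfolding w_def carrier_vec_def by simp
  define P where "P \<theta> = (\<Sum>k<n. v $ k * ex (int k) \<theta>)" for \<theta>
  define Q where "Q \<theta> = (\<Sum>j<n. w $ j * ex (int j) \<theta>)" for \<theta>
  have F: "((\<lambda>\<theta>. g \<theta> * (P \<theta> * cnj (Q \<theta>))) has_integral of_real (2 * pi) * of_real ((cvec_norm w)\<^sup>2)) {-pi..pi}"
    using toeplitz_form[OF g v w] sum_cnj_self[of w n] w unfolding P_def Q_def w_def by simp
  have IP: "((\<lambda>\<theta>. (cmod (P \<theta>))\<^sup>2) has_integral 2 * pi * (cvec_norm v)\<^sup>2) {-pi..pi}"
    unfolding P_def using parseval_real[of v n] v by simp
  have IQ: "((\<lambda>\<theta>. (cmod (Q \<theta>))\<^sup>2) has_integral 2 * pi * (cvec_norm w)\<^sup>2) {-pi..pi}"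
    unfolding Q_def using parseval_real[of w n] w by simp
  have key: "2 * (cvec_norm w)\<^sup>2 \<le> \<delta> * (t * (cvec_norm w)\<^sup>2 + (cvec_norm v)\<^sup>2 / t)" if t: "t > 0" for t
  proof -
    define k where "k \<theta> = \<delta> * ((t * (cmod (Q \<theta>))\<^sup>2 + (cmod (P \<theta>))\<^sup>2 / t) / 2)" for \<theta>
    have Ik: "(k has_integral \<delta> * ((t * (2 * pi * (cvec_norm w)\<^sup>2) + (2 * pi * (cvec_norm v)\<^sup>2) / t) / 2)) {-pi..pi}"
      unfolding k_def
      by (intro has_integral_mult_right has_integral_divide has_integral_add IP IQ)
    have "norm (integral {-pi..pi} (\<lambda>\<theta>. g \<theta> * (P \<theta> * cnj (Q \<theta>)))) \<le> integral {-pi..pi} k"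
    proof (rule integral_norm_bound_integral)
      show "(\<lambda>\<theta>. g \<theta> * (P \<theta> * cnj (Q \<theta>))) integrable_on {-pi..pi}" using F by blast
      show "k integrable_on {-pi..pi}" using Ik by blast
      fix \<theta> assume th: "\<theta> \<in> {-pi..pi}"
      have "norm (g \<theta> * (P \<theta> * cnj (Q \<theta>))) = cmod (g \<theta>) * (cmod (P \<theta>) * cmod (Q \<theta>))"
        by (simp add: norm_mult)
      also have "\<dots> \<le> \<delta> * (cmod (P \<theta>) * cmod (Q \<theta>))"
        by (rule mult_right_mono[OF bd[OF th]]) simp
      also have "\<dots> \<le> k \<theta>" unfolding k_def
        by (rule mult_left_mono[OF amgm[OF t] d0])
      finally show "norm (g \<theta> * (P \<theta> * cnj (Q \<theta>))) \<le> k \<theta>" .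
    qed
    then have "norm (of_real (2 * pi) * of_real ((cvec_norm w)\<^sup>2) :: complex) \<le>
        \<delta> * ((t * (2 * pi * (cvec_norm w)\<^sup>2) + (2 * pi * (cvec_norm v)\<^sup>2) / t) / 2)"
      using integral_unique[OF F] integral_unique[OF Ik] by simp
    then have "2 * pi * (cvec_norm w)\<^sup>2 \<le> pi * (\<delta> * (t * (cvec_norm w)\<^sup>2 + (cvec_norm v)\<^sup>2 / t))"
      by (simp add: norm_mult norm_power algebra_simps add_divide_distrib)
    then show ?thesis by (simp add: mult.assoc)
  qed
  show "cvec_norm (toeplitz_mat g n *\<^sub>v v) \<le> \<delta> * cvec_norm v"
  proof (cases "cvec_norm w = 0")
    case True then show ?thesis using d0 unfolding w_def[symmetric] by simp
  next
    case False
    then have wp: "cvec_norm w > 0" using cvec_norm_nonneg[of w] by linarith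
    show ?thesis
    proof (cases "cvec_norm v = 0")
      case True
      then have "v = 0\<^sub>v n" using cvec_norm_eq0[of v] v by simp
      then have "w = 0\<^sub>v n" unfolding w_def using mat_vec_zero[of "toeplitz_mat g n"] by simp
      then show ?thesis using False by simp
    next
      case False
      then have vp: "cvec_norm v > 0" using cvec_norm_nonneg[of v] by linarith
      have "2 * (cvec_norm w)\<^sup>2 \<le> \<delta> * ((cvec_norm v / cvec_norm w) * (cvec_norm w)\<^sup>2 + (cvec_norm v)\<^sup>2 / (cvec_norm v / cvec_norm w))"
        using key[of "cvec_norm v / cvec_norm w"] vp wp by simp
      also have "\<dots> = \<delta> * (2 * (cvec_norm v * cvec_norm w))"
        using vp wp by (simp add: field_simps power2_eq_square)
      finally have "cvec_norm w * cvec_norm w \<le> (\<delta> * cvec_norm v) * cvec_norm w"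
        by (simp add: power2_eq_square algebra_simps)
      then have "cvec_norm w \<le> \<delta> * cvec_norm v" using wp by simp
      then show ?thesis unfolding w_def .
    qed
  qed
qed

lemma opt_circ_index: "j < n \<Longrightarrow> k < n \<Longrightarrow> opt_circ g n $$ (j,k) = opt_circ_coeff g n ((int j - int k) mod int n)"
  by (simp add: opt_circ_def)

lemma opt_circ_carrier[simp]: "opt_circ g n \<in> carrier_mat n n"
  by (simp add: opt_circ_def)

lemma opt_circ_dims[simp]: "dim_row (opt_circ g n) = n" "dim_col (opt_circ g n) = n"
  by (simp_all add: opt_circ_def)

definition sig :: "nat \<Rightarrow> nat \<Rightarrow> nat \<Rightarrow> nat" where "sig n s x = (x + s) mod n"
definition tau :: "nat \<Rightarrow> nat \<Rightarrow> nat \<Rightarrow> nat" where "tau n s y = (y + (n - s)) mod n"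

lemma tau_sig: assumes "s < n" "x < n" shows "tau n s (sig n s x) = x"
proof -
  have "tau n s (sig n s x) = (x + s + (n - s)) mod n" unfolding tau_def sig_def by (simp add: mod_add_left_eq)
  also have "x + s + (n - s) = x + n" using assms by simp
  finally show ?thesis using assms by simp
qed

lemma sig_tau: assumes "s < n" "y < n" shows "sig n s (tau n s y) = y"
proof -
  have "sig n s (tau n s y) = (y + (n - s) + s) mod n" unfolding tau_def sig_def by (simp add: mod_add_left_eq)
  also have "y + (n - s) + s = y + n" using assms by simp
  finally show ?thesis using assms by simp
qed

lemma sig_less: "0 < n \<Longrightarrow> sig n s x < n" by (simp add: sig_def)
lemma tau_less: "0 < n \<Longrightarrow> tau n s x < n" by (simp add: tau_def)

lemma bij_sig: assumes "s < n" shows "bij_betw (sig n s) {..<n} {..<n}"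
  by (rule bij_betw_byWitness[where f' = "tau n s"]) (use assms tau_sig sig_tau sig_less tau_less in auto)

lemma sum_sig: assumes "s < n" shows "(\<Sum>x<n. h (sig n s x)) = (\<Sum>y<n. h y)"
  using sum.reindex_bij_betw[OF bij_sig[OF assms], of h] .

lemma circ_avg:
  assumes n: "0 < n" and j: "j < n" and k: "k < n"
  shows "opt_circ_coeff g n ((int j - int k) mod int n) =
     (\<Sum>s<n. fourier_coeff g (int (sig n s j) - int (sig n s k))) / of_nat n"
proof -
  define a where "a = fourier_coeff g"
  define d where "d = nat ((int j - int k) mod int n)"
  have dd: "int d = (int j - int k) mod int n" unfolding d_def using n by simp
  have "int d < int n" unfolding dd using n by simp
  then have dn: "d < n" by simp
  have diff: "int (sig n s j) - int (sig n s k) = (if d \<le> sig n s j then int d else int d - int n)" for s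
  proof -
    have x: "int (sig n s j) = (int j + int s) mod int n" unfolding sig_def by (simp add: of_nat_mod)
    have y: "int (sig n s k) = (int k + int s) mod int n" unfolding sig_def by (simp add: of_nat_mod)
    have "(int (sig n s j) - int d) mod int n = ((int j + int s) mod int n - (int j - int k) mod int n) mod int n"
      by (simp add: x dd)
    also have "\<dots> = ((int j + int s) - (int j - int k)) mod int n" by (rule mod_diff_eq)
    also have "((int j + int s) - (int j - int k)) = int k + int s" by simp
    also have "(int k + int s) mod int n = int (sig n s k)" by (simp only: y)
    finally have e: "int (sig n s k) = (int (sig n s j) - int d) mod int n" ..
    have xl: "sig n s j < n" using sig_less[OF n] .
    show ?thesis
    proof (cases "d \<le> sig n s j")
      case True
      have "(int (sig n s j) - int d) mod int n = int (sig n s j) - int d"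
        by (rule mod_pos_pos_trivial) (use True xl in auto)
      then show ?thesis using True e by simp
    next
      case False
      have "(int (sig n s j) - int d) mod int n = (int (sig n s j) - int d + int n) mod int n"
        by simp
      also have "\<dots> = int (sig n s j) - int d + int n"
        by (rule mod_pos_pos_trivial) (use False dn in auto)
      finally have "(int (sig n s j) - int d) mod int n = int (sig n s j) - int d + int n" .
      then show ?thesis using False e by simp
    qed
  qed
  have "(\<Sum>s<n. a (int (sig n s j) - int (sig n s k))) = (\<Sum>s<n. (\<lambda>x. if d \<le> x then a (int d) else a (int d - int n)) (sig n s j))"
    by (intro sum.cong refl) (simp add: diff)
  also have "\<dots> = (\<Sum>x<n. if d \<le> x then a (int d) else a (int d - int n))"
  proof -
    have "(\<Sum>s<n. (\<lambda>x. if d \<le> x then a (int d) else a (int d - int n)) (sig n j s)) = (\<Sum>x<n. if d \<le> x then a (int d) else a (int d - int n))"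
      by (rule sum_sig) (use j in auto)
    moreover have "sig n s j = sig n j s" for s unfolding sig_def by (simp add: add.commute)
    ultimately show ?thesis by simp
  qed
  also have "\<dots> = (\<Sum>x\<in>{..<n} \<inter> {x. d \<le> x}. a (int d)) + (\<Sum>x\<in>{..<n} \<inter> - {x. d \<le> x}. a (int d - int n))"
    by (rule sum.If_cases) simp
  also have "{..<n} \<inter> {x. d \<le> x} = {d..<n}" by auto
  also have "{..<n} \<inter> - {x. d \<le> x} = {..<d}" using dn by auto
  finally have S: "(\<Sum>s<n. a (int (sig n s j) - int (sig n s k))) = of_nat (n - d) * a (int d) + of_nat d * a (int d - int n)"
    by simp
  have "opt_circ_coeff g n ((int j - int k) mod int n) = (of_int (int n - int d) * a (int d) + of_int (int d) * a (int d - int n)) / of_nat n"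
    unfolding opt_circ_coeff_def a_def dd ..
  also have "of_int (int n - int d) = (of_nat (n - d) :: complex)" using dn by (simp add: of_nat_diff)
  finally show ?thesis using S unfolding a_def by simp
qed

lemma sum_tau: assumes "s < n" shows "(\<Sum>y<n. h (tau n s y)) = (\<Sum>x<n. h x)"
proof -
  have "(\<Sum>x<n. h x) = (\<Sum>x<n. h (tau n s (sig n s x)))" using tau_sig[OF assms] by simp
  also have "\<dots> = (\<Sum>y<n. h (tau n s y))" by (rule sum_sig[OF assms])
  finally show ?thesis ..
qed

lemma cvec_norm_perm: assumes s: "s < n" and u: "dim_vec u = n"
  shows "cvec_norm (vec n (\<lambda>y. u $ tau n s y)) = cvec_norm u"
proof -
  have "(cvec_norm (vec n (\<lambda>y. u $ tau n s y)))\<^sup>2 = (\<Sum>y<n. (cmod (u $ tau n s y))\<^sup>2)"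
    unfolding cvec_norm_sq by simp
  also have "\<dots> = (\<Sum>x<n. (cmod (u $ x))\<^sup>2)" by (rule sum_tau[OF s])
  also have "\<dots> = (cvec_norm u)\<^sup>2" unfolding cvec_norm_sq u ..
  finally show ?thesis by (simp add: power2_eq_iff_nonneg)
qed

lemma cs_vec: assumes "dim_vec x = n" "dim_vec y = n"
  shows "cmod (\<Sum>j<n. cnj (x $ j) * y $ j) \<le> cvec_norm x * cvec_norm y"
proof -
  have "cmod (\<Sum>j<n. cnj (x $ j) * y $ j) \<le> (\<Sum>j<n. \<bar>cmod (x $ j)\<bar> * \<bar>cmod (y $ j)\<bar>)"
    by (rule order_trans[OF norm_sum]) (simp add: norm_mult)
  also have "\<dots> \<le> L2_set (\<lambda>j. cmod (x $ j)) {..<n} * L2_set (\<lambda>j. cmod (y $ j)) {..<n}"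
    by (rule L2_set_mult_ineq)
  also have "\<dots> = cvec_norm x * cvec_norm y" unfolding cvec_norm_L2 assms ..
  finally show ?thesis .
qed

lemma circ_nb: assumes T: "nb (toeplitz_mat g n) \<delta>" and d0: "0 \<le> \<delta>"
  shows "nb (opt_circ g n) \<delta>"
proof (rule nbI)
  fix v :: "complex vec" assume v0: "v \<in> carrier_vec (dim_col (opt_circ g n))"
  have v: "v \<in> carrier_vec n" using v0 by simp
  have dv: "dim_vec v = n" using v by simp
  define u where "u = opt_circ g n *\<^sub>v v"
  have du: "dim_vec u = n" unfolding u_def by simp
  show "cvec_norm (opt_circ g n *\<^sub>v v) \<le> \<delta> * cvec_norm v"
  proof (cases "n = 0")
    case True
    then have "cvec_norm u = 0" using du by (simp add: cvec_norm_def)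
    then show ?thesis using d0 unfolding u_def[symmetric] by simp
  next
    case False
    then have n: "0 < n" by simp
    define TT where "TT = toeplitz_mat g n"
    have TTc: "TT \<in> carrier_mat n n" unfolding TT_def by simp
    have Cij: "opt_circ g n $$ (j,k) = (\<Sum>s<n. TT $$ (sig n s j, sig n s k)) / of_nat n" if "j < n" "k < n" for j k
      using that by (simp add: opt_circ_index circ_avg[OF n] TT_def toeplitz_index sig_less[OF n])
    have uj: "u $ j = (\<Sum>s<n. \<Sum>k<n. TT $$ (sig n s j, sig n s k) * v $ k) / of_nat n" if j: "j < n" for j
    proof -
      have "u $ j = (\<Sum>k<n. opt_circ g n $$ (j,k) * v $ k)" unfolding u_def using mv_index[OF opt_circ_carrier v j] .
      also have "\<dots> = (\<Sum>k<n. (\<Sum>s<n. TT $$ (sig n s j, sig n s k) * v $ k) / of_nat n)"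
        using j by (intro sum.cong refl) (simp add: Cij sum_distrib_right)
      also have "\<dots> = (\<Sum>k<n. \<Sum>s<n. TT $$ (sig n s j, sig n s k) * v $ k) / of_nat n"
        by (simp add: sum_divide_distrib)
      also have "\<dots> = (\<Sum>s<n. \<Sum>k<n. TT $$ (sig n s j, sig n s k) * v $ k) / of_nat n"
        by (subst sum.swap) (rule refl)
      finally show ?thesis .
    qed
    define I where "I s = (\<Sum>j<n. cnj (u $ j) * (\<Sum>k<n. TT $$ (sig n s j, sig n s k) * v $ k))" for s
    have Isum: "(\<Sum>j<n. cnj (u $ j) * u $ j) = (\<Sum>s<n. I s) / of_nat n"
    proof -
      have "(\<Sum>j<n. cnj (u $ j) * u $ j) = (\<Sum>j<n. (\<Sum>s<n. cnj (u $ j) * (\<Sum>k<n. TT $$ (sig n s j, sig n s k) * v $ k)) / of_nat n)"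
        by (intro sum.cong refl) (simp add: uj sum_distrib_left)
      also have "\<dots> = (\<Sum>j<n. \<Sum>s<n. cnj (u $ j) * (\<Sum>k<n. TT $$ (sig n s j, sig n s k) * v $ k)) / of_nat n"
        by (simp add: sum_divide_distrib)
      also have "\<dots> = (\<Sum>s<n. I s) / of_nat n" unfolding I_def
        by (subst sum.swap) (rule refl)
      finally show ?thesis .
    qed
    have Ibound: "cmod (I s) \<le> cvec_norm u * (\<delta> * cvec_norm v)" if s: "s < n" for s
    proof -
      define u' where "u' = vec n (\<lambda>y. u $ tau n s y)"
      define v' where "v' = vec n (\<lambda>y. v $ tau n s y)"
      have v'c: "v' \<in> carrier_vec n" unfolding v'_def by simp
      have inner: "(\<Sum>k<n. TT $$ (sig n s j, sig n s k) * v $ k) = (TT *\<^sub>v v') $ (sig n s j)" if j: "j < n" for j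
      proof -
        have "(\<Sum>k<n. TT $$ (sig n s j, sig n s k) * v $ k) = (\<Sum>k<n. TT $$ (sig n s j, sig n s k) * v' $ (sig n s k))"
          by (intro sum.cong refl) (simp add: v'_def sig_less[OF n] tau_sig[OF s])
        also have "\<dots> = (\<Sum>z<n. TT $$ (sig n s j, z) * v' $ z)"
          by (rule sum_sig[OF s, of "\<lambda>z. TT $$ (sig n s j, z) * v' $ z"])
        also have "\<dots> = (TT *\<^sub>v v') $ (sig n s j)"
          using mv_index[OF TTc v'c, of "sig n s j"] sig_less[OF n] by simp
        finally show ?thesis .
      qed
      have "I s = (\<Sum>j<n. cnj (u' $ (sig n s j)) * (TT *\<^sub>v v') $ (sig n s j))"
        unfolding I_def by (intro sum.cong refl) (simp add: inner u'_def sig_less[OF n] tau_sig[OF s])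
      also have "\<dots> = (\<Sum>y<n. cnj (u' $ y) * (TT *\<^sub>v v') $ y)"
        by (rule sum_sig[OF s, of "\<lambda>y. cnj (u' $ y) * (TT *\<^sub>v v') $ y"])
      finally have Ie: "I s = (\<Sum>y<n. cnj (u' $ y) * (TT *\<^sub>v v') $ y)" .
      have "cmod (I s) \<le> cvec_norm u' * cvec_norm (TT *\<^sub>v v')"
        unfolding Ie by (rule cs_vec) (use TTc in \<open>auto simp: u'_def\<close>)
      also have "\<dots> \<le> cvec_norm u' * (\<delta> * cvec_norm v')"
        by (rule mult_left_mono[OF nbD[OF T[folded TT_def]]]) (use v'c TTc in auto)
      also have "cvec_norm u' = cvec_norm u" unfolding u'_def by (rule cvec_norm_perm[OF s du])
      also have "cvec_norm v' = cvec_norm v" unfolding v'_def by (rule cvec_norm_perm[OF s dv])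
      finally show ?thesis .
    qed
    have "(cvec_norm u)\<^sup>2 = cmod (\<Sum>j<n. cnj (u $ j) * u $ j)"
      using sum_cnj_self[of u n] du by (simp add: norm_power)
    also have "\<dots> = cmod (\<Sum>s<n. I s) / of_nat n" unfolding Isum by (simp add: norm_divide)
    also have "\<dots> \<le> (\<Sum>s<n. cmod (I s)) / of_nat n"
      by (rule divide_right_mono[OF norm_sum]) simp
    also have "\<dots> \<le> (\<Sum>s<n. cvec_norm u * (\<delta> * cvec_norm v)) / of_nat n"
      by (rule divide_right_mono[OF sum_mono]) (use Ibound in auto)
    also have "\<dots> = cvec_norm u * (\<delta> * cvec_norm v)" using n by simp
    finally have uu: "cvec_norm u * cvec_norm u \<le> cvec_norm u * (\<delta> * cvec_norm v)"
      by (simp add: power2_eq_square)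
    have "cvec_norm u \<le> \<delta> * cvec_norm v"
    proof (cases "cvec_norm u = 0")
      case True then show ?thesis using d0 by simp
    next
      case False
      then have "cvec_norm u > 0" using cvec_norm_nonneg[of u] by linarith
      then show ?thesis using uu by (simp add: mult_le_cancel_left_pos)
    qed
    then show ?thesis unfolding u_def .
  qed
qed

lemma tpoly_scale: "tpoly (map (\<lambda>p. (c * fst p, snd p)) ps) \<theta> = c * tpoly ps \<theta>"
  by (induction ps) (auto simp: algebra_simps)

lemma tpoly_cnj: "cnj (tpoly ps \<theta>) = tpoly (map (\<lambda>p. (cnj (fst p), - snd p)) ps) \<theta>"
  by (induction ps) (auto simp: cnj_ex)

definition tprod :: "(complex \<times> int) list \<Rightarrow> (complex \<times> int) list \<Rightarrow> (complex \<times> int) list" where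
  "tprod ps qs = concat (map (\<lambda>p. map (\<lambda>q. (fst p * fst q, snd p + snd q)) qs) ps)"

lemma tpoly_concat: "tpoly (concat xss) \<theta> = (\<Sum>xs\<leftarrow>xss. tpoly xs \<theta>)"
  by (induction xss) (auto simp: tpoly_append)

lemma tpoly_mult: "tpoly ps \<theta> * tpoly qs \<theta> = tpoly (tprod ps qs) \<theta>"
proof (induction ps)
  case Nil then show ?case by (simp add: tprod_def)
next
  case (Cons p ps)
  have "tpoly (map (\<lambda>q. (fst p * fst q, snd p + snd q)) qs) \<theta> = fst p * ex (snd p) \<theta> * tpoly qs \<theta>"
    by (induction qs) (auto simp: algebra_simps ex_add[symmetric])
  then show ?case using Cons by (simp add: tprod_def tpoly_append algebra_simps)
qed

lemma ex_periodic: "ex m pi = ex m (-pi)"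
proof -
  have "exp (\<i> * of_int m * of_real pi) = exp (\<i> * of_int m * of_real (- pi) + \<i> * (of_int m * (of_real pi * 2)))"
    by (rule arg_cong[where f = exp]) (simp add: algebra_simps)
  also have "\<dots> = exp (\<i> * of_int m * of_real (- pi))" by (rule exp_plus_2pin)
  finally show ?thesis unfolding ex_def .
qed

lemma tpoly_periodic: "tpoly ps pi = tpoly ps (-pi)"
  by (induction ps) (auto simp: ex_periodic)

lemma Arg2pi_Arg: "z \<noteq> 0 \<Longrightarrow> Arg2pi z = (if 0 \<le> Arg z then Arg z else Arg z + 2 * pi)"
proof -
  assume z: "z \<noteq> 0"
  have A: "is_Arg z (Arg z)" by (rule is_Arg_Arg[OF z])
  have B: "0 \<le> Arg2pi z" "Arg2pi z < 2 * pi" "is_Arg z (Arg2pi z)" using Arg2pi[of z] by auto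
  have r: "-pi < Arg z" "Arg z \<le> pi" using mpi_less_Arg[of z] Arg_le_pi[of z] by auto
  show ?thesis
  proof (cases "0 \<le> Arg z")
    case True
    have "Arg2pi z = Arg z" by (rule is_Arg_eqI[OF B(3) A _ z]) (use True r B in auto)
    then show ?thesis using True by simp
  next
    case False
    have A': "is_Arg z (Arg z + of_int 1 * (2 * pi))" using A is_Arg_2pi_iff by blast
    have "Arg2pi z = Arg z + of_int 1 * (2 * pi)" by (rule is_Arg_eqI[OF B(3) A' _ z]) (use False r B in auto)
    then show ?thesis using False by simp
  qed
qed

lemma per_int: assumes per: "\<And>x. f (x + 2 * pi) = f x" shows "f (x + 2 * pi) = f x"
  using per .

lemma circle_fun_cont:
  fixes f :: "real \<Rightarrow> complex"
  assumes cont: "continuous_on UNIV f" and per: "\<And>x. f (x + 2 * pi) = f x"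
  shows "continuous_on (sphere 0 1) (\<lambda>z. f (Arg z))"
proof -
  have eq: "f (Arg z) = f (Arg2pi z)" for z
  proof (cases "z = 0")
    case True then show ?thesis by (simp add: Arg_zero)
  next
    case False then show ?thesis using Arg2pi_Arg[OF False] per by simp
  qed
  have cf: "isCont f x" for x using cont by (simp add: continuous_on_eq_continuous_at)
  show ?thesis
  proof (rule continuous_at_imp_continuous_on, rule ballI)
    fix z :: complex assume z: "z \<in> sphere 0 1"
    then have z0: "z \<noteq> 0" by auto
    show "isCont (\<lambda>z. f (Arg z)) z"
    proof (cases "z \<in> \<real>\<^sub>\<le>\<^sub>0")
      case False
      show ?thesis by (rule continuous_at_compose[OF continuous_at_Arg[OF False] cf, unfolded o_def])
    next
      case True
      then have "z \<notin> \<real>\<^sub>\<ge>\<^sub>0" using z0 by (auto simp: nonpos_Reals_def nonneg_Reals_def)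
      then have "isCont (\<lambda>z. f (Arg2pi z)) z"
        by (rule continuous_at_compose[OF continuous_at_Arg2pi cf, unfolded o_def])
      then show ?thesis by (simp add: eq)
    qed
  qed
qed

lemma sphere_ex: assumes "z \<in> sphere 0 1" shows "z = ex 1 (Arg z)"
proof -
  have "z \<noteq> 0" "cmod z = 1" using assms by auto
  then show ?thesis using Arg_eq[of z] by (simp add: ex_def)
qed

lemma real_trig_approx:
  fixes h :: "complex \<Rightarrow> real"
  assumes hc: "continuous_on (sphere 0 1) h" and e: "0 < e"
  shows "\<exists>ps. \<forall>z\<in>sphere 0 1. \<bar>h z - Re (tpoly ps (Arg z))\<bar> < e"
proof -
  define S :: "complex set" where "S = sphere 0 1"
  define P where "P g \<longleftrightarrow> continuous_on S g \<and> (\<exists>ps. \<forall>z\<in>S. g z = Re (tpoly ps (Arg z)))" for g :: "complex \<Rightarrow> real"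
  have "\<exists>g. P g \<and> (\<forall>x\<in>S. \<bar>h x - g x\<bar> < e)"
  proof (rule Stone_Weierstrass_HOL)
    show "compact S" unfolding S_def by simp
    show "P (\<lambda>x. c)" for c
      unfolding P_def by (auto intro!: exI[of _ "[(of_real c, 0)]"] simp: ex_def)
    show "continuous_on S g" if "P g" for g using that unfolding P_def by blast
    show "P (\<lambda>x. f x + g x)" if "P f \<and> P g" for f g
    proof -
      from that obtain ps qs where ps: "\<forall>z\<in>S. f z = Re (tpoly ps (Arg z))" and qs: "\<forall>z\<in>S. g z = Re (tpoly qs (Arg z))"
        and c: "continuous_on S f" "continuous_on S g" unfolding P_def by blast
      show ?thesis unfolding P_def
        by (intro conjI continuous_on_add c exI[of _ "ps @ qs"]) (simp add: tpoly_append ps qs)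
    qed
    show "P (\<lambda>x. f x * g x)" if "P f \<and> P g" for f g
    proof -
      from that obtain ps qs where ps: "\<forall>z\<in>S. f z = Re (tpoly ps (Arg z))" and qs: "\<forall>z\<in>S. g z = Re (tpoly qs (Arg z))"
        and c: "continuous_on S f" "continuous_on S g" unfolding P_def by blast
      define R where "R = map (\<lambda>p. ((1/2) * fst p, snd p)) (tprod ps (qs @ map (\<lambda>p. (cnj (fst p), - snd p)) qs))"
      have "Re (tpoly R \<theta>) = Re (tpoly ps \<theta>) * Re (tpoly qs \<theta>)" for \<theta>
      proof -
        have "tpoly R \<theta> = (1/2) * (tpoly ps \<theta> * (tpoly qs \<theta> + cnj (tpoly qs \<theta>)))"
          unfolding R_def tpoly_scale tpoly_mult[symmetric] tpoly_append tpoly_cnj ..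
        also have "tpoly qs \<theta> + cnj (tpoly qs \<theta>) = of_real (2 * Re (tpoly qs \<theta>))"
          by (simp add: complex_add_cnj)
        finally show ?thesis by simp
      qed
      then show ?thesis unfolding P_def
        by (intro conjI continuous_on_mult c exI[of _ R]) (simp add: ps qs)
    qed
    show "\<exists>g. P g \<and> g x \<noteq> g y" if "x \<in> S \<and> y \<in> S \<and> x \<noteq> y" for x y
    proof (cases "Re x = Re y")
      case False
      have "P Re" unfolding P_def
      proof (intro conjI continuous_intros exI[of _ "[(1, 1)]"] ballI)
        fix z assume "z \<in> S" then show "Re z = Re (tpoly [(1, 1)] (Arg z))"
          using sphere_ex[of z] by (simp add: S_def)
      qed
      then show ?thesis using False by blast
    next
      case True
      then have "Im x \<noteq> Im y" using that complex_eqI by blast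
      have "P Im" unfolding P_def
      proof (intro conjI continuous_intros exI[of _ "[(-\<i>, 1)]"] ballI)
        fix z assume "z \<in> S" then show "Im z = Re (tpoly [(-\<i>, 1)] (Arg z))"
          using sphere_ex[of z] by (simp add: S_def)
      qed
      then show ?thesis using \<open>Im x \<noteq> Im y\<close> by blast
    qed
    show "continuous_on S h" using hc unfolding S_def .
    show "0 < e" by (rule e)
  qed
  then obtain g ps where "\<forall>z\<in>S. g z = Re (tpoly ps (Arg z))" "\<forall>x\<in>S. \<bar>h x - g x\<bar> < e"
    unfolding P_def by blast
  then show ?thesis unfolding S_def by (intro exI[of _ ps]) auto
qed

lemma trig_approx:
  fixes f :: "real \<Rightarrow> complex"
  assumes cont: "continuous_on UNIV f" and per: "\<And>x. f (x + 2 * pi) = f x" and e: "0 < e"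
  shows "\<exists>ps. \<forall>\<theta>\<in>{-pi..pi}. cmod (f \<theta> - tpoly ps \<theta>) \<le> e"
proof -
  define h where "h z = f (Arg z)" for z
  have hc: "continuous_on (sphere 0 1) h" unfolding h_def by (rule circle_fun_cont[OF cont per])
  have e2: "0 < e / 2" using e by simp
  obtain ps where ps: "\<forall>z\<in>sphere 0 1. \<bar>Re (h z) - Re (tpoly ps (Arg z))\<bar> < e / 2"
    using real_trig_approx[OF continuous_on_Re[OF hc] e2] by blast
  obtain qs where qs: "\<forall>z\<in>sphere 0 1. \<bar>Im (h z) - Re (tpoly qs (Arg z))\<bar> < e / 2"
    using real_trig_approx[OF continuous_on_Im[OF hc] e2] by blast
  define ps' where "ps' = map (\<lambda>p. ((1/2) * fst p, snd p)) (ps @ map (\<lambda>p. (cnj (fst p), - snd p)) ps)"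
  define qs' where "qs' = map (\<lambda>p. ((\<i>/2) * fst p, snd p)) (qs @ map (\<lambda>p. (cnj (fst p), - snd p)) qs)"
  have Rps: "tpoly ps' \<theta> = of_real (Re (tpoly ps \<theta>))" for \<theta>
  proof -
    have "tpoly ps' \<theta> = (1/2) * (tpoly ps \<theta> + cnj (tpoly ps \<theta>))"
      unfolding ps'_def tpoly_scale tpoly_append tpoly_cnj ..
    then show ?thesis by (simp add: complex_add_cnj)
  qed
  have Rqs: "tpoly qs' \<theta> = \<i> * of_real (Re (tpoly qs \<theta>))" for \<theta>
  proof -
    have "tpoly qs' \<theta> = (\<i>/2) * (tpoly qs \<theta> + cnj (tpoly qs \<theta>))"
      unfolding qs'_def tpoly_scale tpoly_append tpoly_cnj ..
    then show ?thesis by (simp add: complex_add_cnj)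
  qed
  show ?thesis
  proof (intro exI[of _ "ps' @ qs'"] ballI)
    fix \<theta> assume th: "\<theta> \<in> {-pi..pi}"
    define t where "t = (if \<theta> = -pi then pi else \<theta>)"
    have tr: "t \<in> {-pi<..pi}" using th by (auto simp: t_def)
    have ft: "f t = f \<theta>" using per[of "-pi"] by (auto simp: t_def)
    have tp: "tpoly xs t = tpoly xs \<theta>" for xs using tpoly_periodic[of xs] by (auto simp: t_def)
    have z: "cis t \<in> sphere 0 1" by simp
    have A: "Arg (cis t) = t" by (rule Arg_cis[OF tr])
    have hz: "h (cis t) = f \<theta>" unfolding h_def A ft ..
    have 1: "\<bar>Re (f \<theta>) - Re (tpoly ps \<theta>)\<bar> < e / 2" using ps[rule_format, OF z] unfolding hz A tp .
    have 2: "\<bar>Im (f \<theta>) - Re (tpoly qs \<theta>)\<bar> < e / 2" using qs[rule_format, OF z] unfolding hz A tp .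
    have "cmod (f \<theta> - tpoly (ps' @ qs') \<theta>) = cmod (of_real (Re (f \<theta>) - Re (tpoly ps \<theta>)) + \<i> * of_real (Im (f \<theta>) - Re (tpoly qs \<theta>)))"
      unfolding tpoly_append Rps Rqs by (rule arg_cong[where f = cmod]) (simp add: complex_eq_iff)
    also have "cmod (of_real (Re (f \<theta>) - Re (tpoly ps \<theta>)) + \<i> * of_real (Im (f \<theta>) - Re (tpoly qs \<theta>)))
        \<le> cmod (of_real (Re (f \<theta>) - Re (tpoly ps \<theta>)) :: complex) + cmod (\<i> * of_real (Im (f \<theta>) - Re (tpoly qs \<theta>)))"
      by (rule norm_triangle_ineq)
    finally have "cmod (f \<theta> - tpoly (ps' @ qs') \<theta>) \<le> \<bar>Re (f \<theta>) - Re (tpoly ps \<theta>)\<bar> + \<bar>Im (f \<theta>) - Re (tpoly qs \<theta>)\<bar>"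
      by (simp only: norm_mult norm_ii mult.left_neutral norm_of_real)
    also have "\<dots> \<le> e" using 1 2 by simp
    finally show "cmod (f \<theta> - tpoly (ps' @ qs') \<theta>) \<le> e" .
  qed
qed

definition msum :: "nat \<Rightarrow> (nat \<Rightarrow> complex mat) \<Rightarrow> nat \<Rightarrow> complex mat" where
  "msum n F T = mat n n (\<lambda>(i,j). \<Sum>m<T. F m $$ (i,j))"

lemma msum_carrier[simp]: "msum n F T \<in> carrier_mat n n"
  by (simp add: msum_def)

lemma msum_dims[simp]: "dim_row (msum n F T) = n" "dim_col (msum n F T) = n"
  by (simp_all add: msum_def)

lemma msum_index: "i < n \<Longrightarrow> j < n \<Longrightarrow> msum n F T $$ (i,j) = (\<Sum>m<T. F m $$ (i,j))"
  by (simp add: msum_def)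

lemma msum_0: "msum n F 0 = 0\<^sub>m n n"
  by (rule eq_matI) (auto simp: msum_index)

lemma msum_Suc: assumes "F T \<in> carrier_mat n n" shows "msum n F (Suc T) = msum n F T + F T"
  by (rule eq_matI) (use assms in \<open>auto simp: msum_index\<close>)

lemma nb_msum: assumes "\<And>m. m < T \<Longrightarrow> F m \<in> carrier_mat n n" "\<And>m. m < T \<Longrightarrow> nb (F m) (b m)"
  shows "nb (msum n F T) (\<Sum>m<T. b m)"
  using assms
proof (induction T)
  case 0 then show ?case using nb_zero by (simp add: msum_0)
next
  case (Suc T)
  have "nb (msum n F T + F T) ((\<Sum>m<T. b m) + b T)"
    by (rule nb_add[of _ n n]) (use Suc in auto)
  then show ?case using Suc.prems(1)[of T] by (simp add: msum_Suc)
qed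

lemma lowrank_msum: assumes "\<And>m. m < T \<Longrightarrow> lowrank n (k m) (F m)"
  shows "lowrank n (\<Sum>m<T. k m) (msum n F T)"
  using assms
proof (induction T)
  case 0 then show ?case using lowrank_zero by (simp add: msum_0)
next
  case (Suc T)
  have "lowrank n ((\<Sum>m<T. k m) + k T) (msum n F T + F T)"
    by (rule lowrank_add) (use Suc in auto)
  then show ?case using lowrank_carrier[OF Suc.prems[of T]] by (simp add: msum_Suc)
qed

lemma msum_add3: assumes "\<And>m. m < T \<Longrightarrow> F m \<in> carrier_mat n n" "\<And>m. m < T \<Longrightarrow> G m \<in> carrier_mat n n"
    "\<And>m. m < T \<Longrightarrow> H m \<in> carrier_mat n n"
  shows "msum n (\<lambda>m. F m + G m + H m) T = msum n F T + msum n G T + msum n H T"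
proof (rule eq_matI)
  fix i j assume ij: "i < dim_row (msum n F T + msum n G T + msum n H T)" "j < dim_col (msum n F T + msum n G T + msum n H T)"
  then have i: "i < n" and j: "j < n" by auto
  have "msum n (\<lambda>m. F m + G m + H m) T $$ (i,j) = (\<Sum>m<T. (F m + G m + H m) $$ (i,j))"
    by (rule msum_index[OF i j])
  also have "\<dots> = (\<Sum>m<T. F m $$ (i,j) + G m $$ (i,j) + H m $$ (i,j))"
  proof (rule sum.cong[OF refl])
    fix m assume "m \<in> {..<T}"
    then have "F m \<in> carrier_mat n n" "G m \<in> carrier_mat n n" "H m \<in> carrier_mat n n" using assms by auto
    then show "(F m + G m + H m) $$ (i,j) = F m $$ (i,j) + G m $$ (i,j) + H m $$ (i,j)" using i j by simp
  qed
  also have "\<dots> = (\<Sum>m<T. F m $$ (i,j)) + (\<Sum>m<T. G m $$ (i,j)) + (\<Sum>m<T. H m $$ (i,j))"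
    by (simp add: sum.distrib)
  also have "\<dots> = (msum n F T + msum n G T + msum n H T) $$ (i,j)"
    using i j by (simp add: msum_index assms)
  finally show "msum n (\<lambda>m. F m + G m + H m) T $$ (i,j) = (msum n F T + msum n G T + msum n H T) $$ (i,j)" .
qed auto

lemma pow_decomp:
  assumes X: "X \<in> carrier_mat n n" and Y: "Y \<in> carrier_mat n n" and L: "lowrank n r L"
    and S: "S \<in> carrier_mat n n" and XYLS: "X = Y + L + S"
    and nS: "nb S \<eta>" and nX: "nb X K" and nY: "nb Y K" and K: "0 \<le> K" and eta: "0 \<le> \<eta>"
  shows "\<exists>Lk Sk. X ^\<^sub>m k = Y ^\<^sub>m k + Lk + Sk \<and> lowrank n (k * r) Lk \<and> Sk \<in> carrier_mat n n \<and>
     nb Sk (of_nat k * K ^ (k - 1) * \<eta>)"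
proof (induction k)
  case 0
  have "X ^\<^sub>m 0 = Y ^\<^sub>m 0 + 0\<^sub>m n n + 0\<^sub>m n n" using X Y by simp
  then show ?case using lowrank_zero nb_zero by (intro exI[of _ "0\<^sub>m n n"]) auto
next
  case (Suc k)
  then obtain Lk Sk where e: "X ^\<^sub>m k = Y ^\<^sub>m k + Lk + Sk" and lr: "lowrank n (k * r) Lk"
    and Sk: "Sk \<in> carrier_mat n n" and nSk: "nb Sk (of_nat k * K ^ (k - 1) * \<eta>)" by blast
  have Lc: "L \<in> carrier_mat n n" using lowrank_carrier[OF L] .
  have Lkc: "Lk \<in> carrier_mat n n" using lowrank_carrier[OF lr] .
  have Yk: "Y ^\<^sub>m k \<in> carrier_mat n n" using Y by simp
  have 1: "X ^\<^sub>m Suc k = Y ^\<^sub>m k * X + Lk * X + Sk * X"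
  proof -
    have "X ^\<^sub>m Suc k = (Y ^\<^sub>m k + Lk + Sk) * X" using e by simp
    also have "\<dots> = (Y ^\<^sub>m k + Lk) * X + Sk * X"
      by (rule add_mult_distrib_mat[OF _ Sk X]) (use Yk Lkc in simp)
    also have "(Y ^\<^sub>m k + Lk) * X = Y ^\<^sub>m k * X + Lk * X"
      by (rule add_mult_distrib_mat[OF Yk Lkc X])
    finally show ?thesis .
  qed
  have 2: "Y ^\<^sub>m k * X = Y ^\<^sub>m Suc k + Y ^\<^sub>m k * L + Y ^\<^sub>m k * S"
  proof -
    have "Y ^\<^sub>m k * X = Y ^\<^sub>m k * (Y + L) + Y ^\<^sub>m k * S"
      unfolding XYLS by (rule mult_add_distrib_mat[OF Yk _ S]) (use Y Lc in simp)
    also have "Y ^\<^sub>m k * (Y + L) = Y ^\<^sub>m k * Y + Y ^\<^sub>m k * L"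
      by (rule mult_add_distrib_mat[OF Yk Y Lc])
    finally show ?thesis by simp
  qed
  define L' where "L' = Y ^\<^sub>m k * L + Lk * X"
  define S' where "S' = Y ^\<^sub>m k * S + Sk * X"
  have eq: "X ^\<^sub>m Suc k = Y ^\<^sub>m Suc k + L' + S'"
  proof (rule eq_matI)
    fix i j assume "i < dim_row (Y ^\<^sub>m Suc k + L' + S')" "j < dim_col (Y ^\<^sub>m Suc k + L' + S')"
    then have i: "i < n" and j: "j < n" using Y X Sk by (auto simp: L'_def S'_def)
    show "(X ^\<^sub>m Suc k) $$ (i,j) = (Y ^\<^sub>m Suc k + L' + S') $$ (i,j)"
      unfolding 1 2 L'_def S'_def using i j X Y Yk Lc Lkc Sk S by simp
  qed (use X Y Sk in \<open>auto simp: L'_def S'_def\<close>)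
  have lr': "lowrank n (Suc k * r) L'"
  proof -
    have "lowrank n (r + k * r) L'" unfolding L'_def
      by (intro lowrank_add lowrank_mult_left lowrank_mult_right Yk X L lr)
    then show ?thesis by (simp add: add.commute)
  qed
  have S'c: "S' \<in> carrier_mat n n" unfolding S'_def using Yk S Sk X by simp
  have a: "nb (Y ^\<^sub>m k) (K ^ k)" by (rule nb_pow[OF Y nY K])
  have b: "nb (Y ^\<^sub>m k * S) (K ^ k * \<eta>)" by (rule nb_mult[OF Yk S a nS]) (simp add: K)
  have c: "nb (Sk * X) ((of_nat k * K ^ (k - 1) * \<eta>) * K)"
    by (rule nb_mult[OF Sk X nSk nX]) (simp add: K eta)
  have c1: "Y ^\<^sub>m k * S \<in> carrier_mat n n" using Yk S by simp
  have c2: "Sk * X \<in> carrier_mat n n" using Sk X by simp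
  have nS': "nb S' (K ^ k * \<eta> + of_nat k * K ^ (k - 1) * \<eta> * K)"
    unfolding S'_def by (rule nb_add[OF c1 c2 b c])
  have "K ^ k * \<eta> + of_nat k * K ^ (k - 1) * \<eta> * K = of_nat (Suc k) * K ^ (Suc k - 1) * \<eta>"
  proof (cases k)
    case 0 then show ?thesis by simp
  next
    case (Suc k') then show ?thesis by (simp add: algebra_simps)
  qed
  then show ?case using eq lr' S'c nS' by (intro exI[of _ L'] exI[of _ S']) auto
qed

definition scoef :: "nat \<Rightarrow> complex" where "scoef m = (-1) ^ m / of_nat (fact (2 * m + 1))"
definition sterm :: "complex mat \<Rightarrow> nat \<Rightarrow> complex mat" where "sterm X m = scoef m \<cdot>\<^sub>m (X ^\<^sub>m (2 * m + 1))"
definition sbeta :: "real \<Rightarrow> nat \<Rightarrow> real" where "sbeta K m = K ^ (2 * m + 1) / fact (2 * m + 1)"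
definition stau :: "real \<Rightarrow> nat \<Rightarrow> real" where "stau K T = (\<Sum>m. sbeta K (m + T))"

lemma cmod_scoef: "cmod (scoef m) = 1 / fact (2 * m + 1)"
proof -
  have "cmod (of_nat (fact (2 * m + 1)) :: complex) = fact (2 * m + 1)" by (metis of_nat_fact norm_of_nat)
  moreover have "cmod ((-1) ^ m :: complex) = 1" by (simp add: norm_power)
  ultimately show ?thesis unfolding scoef_def norm_divide by simp
qed

lemma sbeta_nonneg: "0 \<le> K \<Longrightarrow> 0 \<le> sbeta K m"
  by (simp add: sbeta_def)

lemma summable_sbeta: assumes K: "0 \<le> K" shows "summable (sbeta K)"
proof (rule summable_comparison_test')
  show "summable (\<lambda>m. K * (inverse (fact m) * (K\<^sup>2) ^ m))"
    by (intro summable_mult summable_exp)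
  fix m :: nat
  have f: "(fact m :: real) \<le> fact (2 * m + 1)" by (rule fact_mono) simp
  have "norm (sbeta K m) = K * (K\<^sup>2) ^ m / fact (2 * m + 1)"
  proof -
    have "K ^ (2 * m + 1) = K * (K\<^sup>2) ^ m" by (simp add: power_mult[symmetric])
    then show ?thesis using K by (simp add: sbeta_def)
  qed
  also have "\<dots> \<le> K * (K\<^sup>2) ^ m / fact m"
    by (rule divide_left_mono) (use K f in auto)
  also have "\<dots> = K * (inverse (fact m) * (K\<^sup>2) ^ m)" by (simp add: field_simps)
  finally show "norm (sbeta K m) \<le> K * (inverse (fact m) * (K\<^sup>2) ^ m)" .
qed

lemma stau_nonneg: "0 \<le> K \<Longrightarrow> 0 \<le> stau K T"
  unfolding stau_def by (intro suminf_nonneg summable_ignore_initial_segment summable_sbeta sbeta_nonneg)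

lemma nb_sterm: assumes X: "X \<in> carrier_mat n n" "nb X K" "0 \<le> K" shows "nb (sterm X m) (sbeta K m)"
proof -
  have "nb (sterm X m) (cmod (scoef m) * K ^ (2 * m + 1))"
    unfolding sterm_def by (rule nb_smult[OF nb_pow[OF X(1) X(2) X(3)]])
  then show ?thesis by (simp add: cmod_scoef sbeta_def)
qed

lemma sterm_carrier[simp]: "X \<in> carrier_mat n n \<Longrightarrow> sterm X m \<in> carrier_mat n n"
  unfolding sterm_def by (rule smult_carrier_mat[OF pow_carrier_mat])

lemma sterm_entry: assumes X: "X \<in> carrier_mat n n" "nb X K" "0 \<le> K" "i < n" "j < n"
  shows "cmod (sterm X m $$ (i,j)) \<le> sbeta K m"
  by (rule nb_entry[OF sterm_carrier[OF X(1)] nb_sterm[OF X(1-3)] X(4,5)])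

lemma summable_sterm: assumes X: "X \<in> carrier_mat n n" "nb X K" "0 \<le> K" "i < n" "j < n"
  shows "summable (\<lambda>m. cmod (sterm X m $$ (i,j)))"
  by (rule summable_comparison_test'[OF summable_sbeta[OF X(3)]]) (use sterm_entry[OF X] in simp)

lemma mat_sin_index: assumes X: "X \<in> carrier_mat n n" "i < n" "j < n"
  shows "mat_sin X $$ (i,j) = (\<Sum>m. sterm X m $$ (i,j))"
  using X by (simp add: mat_sin_def sterm_def scoef_def)

lemma mat_sin_dims[simp]: "dim_row (mat_sin X) = dim_row X" "dim_col (mat_sin X) = dim_col X"
  by (simp_all add: mat_sin_def)

lemma mat_sin_carrier[simp]: "X \<in> carrier_mat n n \<Longrightarrow> mat_sin X \<in> carrier_mat n n"
  by (simp add: mat_sin_def)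

definition stail :: "nat \<Rightarrow> complex mat \<Rightarrow> nat \<Rightarrow> complex mat" where
  "stail n X T = mat n n (\<lambda>(i,j). \<Sum>m. sterm X (m + T) $$ (i,j))"

lemma stail_carrier[simp]: "stail n X T \<in> carrier_mat n n"
  by (simp add: stail_def)

lemma stail_dims[simp]: "dim_row (stail n X T) = n" "dim_col (stail n X T) = n"
  by (simp_all add: stail_def)

lemma mat_sin_split: assumes X: "X \<in> carrier_mat n n" "nb X K" "0 \<le> K"
  shows "mat_sin X = msum n (sterm X) T + stail n X T"
proof (rule eq_matI)
  fix i j assume "i < dim_row (msum n (sterm X) T + stail n X T)" "j < dim_col (msum n (sterm X) T + stail n X T)"
  then have i: "i < n" and j: "j < n" by auto
  have s: "summable (\<lambda>m. sterm X m $$ (i,j))"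
    by (rule summable_norm_cancel[OF summable_sterm[OF X i j]])
  show "mat_sin X $$ (i,j) = (msum n (sterm X) T + stail n X T) $$ (i,j)"
    using suminf_split_initial_segment[OF s, of T] i j X
    by (simp add: mat_sin_index msum_index stail_def)
qed (use X in auto)

lemma stail_split: assumes X: "X \<in> carrier_mat n n" "nb X K" "0 \<le> K" and T: "T \<le> T'"
  shows "stail n X T = msum n (\<lambda>m. sterm X (m + T)) (T' - T) + stail n X T'"
proof (rule eq_matI)
  fix i j assume "i < dim_row (msum n (\<lambda>m. sterm X (m + T)) (T' - T) + stail n X T')"
    "j < dim_col (msum n (\<lambda>m. sterm X (m + T)) (T' - T) + stail n X T')"
  then have i: "i < n" and j: "j < n" by auto
  have s: "summable (\<lambda>m. sterm X (m + T) $$ (i,j))"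
    by (rule summable_ignore_initial_segment[OF summable_norm_cancel[OF summable_sterm[OF X i j]]])
  have e: "(\<Sum>m. sterm X (m + (T' - T) + T) $$ (i,j)) = (\<Sum>m. sterm X (m + T') $$ (i,j))"
    using T by (simp add: add.assoc)
  show "stail n X T $$ (i,j) = (msum n (\<lambda>m. sterm X (m + T)) (T' - T) + stail n X T') $$ (i,j)"
    using suminf_split_initial_segment[OF s, of "T' - T"] i j e
    by (simp add: msum_index stail_def)
qed (use X in auto)

lemma nb_stail: assumes X: "X \<in> carrier_mat n n" "nb X K" "0 \<le> K"
  shows "nb (stail n X T) (stau K T)"
proof (rule nb_closed)
  fix d :: real assume d: "0 < d"
  have sb: "summable (sbeta K)" by (rule summable_sbeta[OF X(3)])
  have "0 < d / (real n * real n + 1)" using d by (simp add: add_nonneg_pos)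
  from suminf_exist_split[OF this sb] obtain N where N: "\<And>T'. N \<le> T' \<Longrightarrow> norm (\<Sum>i. sbeta K (i + T')) < d / (real n * real n + 1)"
    by blast
  define T' where "T' = max N T"
  have TT: "T \<le> T'" "N \<le> T'" by (auto simp: T'_def)
  have tau': "stau K T' \<le> d / (real n * real n + 1)"
    using N[OF TT(2)] stau_nonneg[OF X(3), of T'] unfolding stau_def by simp
  have m1: "nb (msum n (\<lambda>m. sterm X (m + T)) (T' - T)) (\<Sum>m<T' - T. sbeta K (m + T))"
    by (rule nb_msum) (use nb_sterm[OF X] X in auto)
  have m2: "(\<Sum>m<T' - T. sbeta K (m + T)) \<le> stau K T"
    unfolding stau_def
    by (rule sum_le_suminf[OF summable_ignore_initial_segment[OF sb]]) (auto intro: sbeta_nonneg X(3))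
  have t1: "nb (stail n X T') (\<Sum>i<n. \<Sum>j<n. cmod (stail n X T' $$ (i,j)))"
    by (rule nb_crude) simp
  have ent: "cmod (stail n X T' $$ (i,j)) \<le> stau K T'" if i: "i < n" and j: "j < n" for i j
  proof -
    have s: "summable (\<lambda>m. cmod (sterm X (m + T') $$ (i,j)))"
      by (rule summable_ignore_initial_segment[OF summable_sterm[OF X i j]])
    have "cmod (stail n X T' $$ (i,j)) = cmod (\<Sum>m. sterm X (m + T') $$ (i,j))"
      using i j by (simp add: stail_def)
    also have "\<dots> \<le> (\<Sum>m. cmod (sterm X (m + T') $$ (i,j)))" by (rule summable_norm[OF s])
    also have "\<dots> \<le> (\<Sum>m. sbeta K (m + T'))"
      by (rule suminf_le[OF _ s summable_ignore_initial_segment[OF sb]]) (rule sterm_entry[OF X i j])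
    finally show ?thesis unfolding stau_def .
  qed
  have "(\<Sum>i<n. \<Sum>j<n. cmod (stail n X T' $$ (i,j))) \<le> (\<Sum>i<n. \<Sum>j<n. stau K T')"
    by (intro sum_mono ent) auto
  also have "\<dots> = real n * real n * stau K T'" by simp
  also have "\<dots> \<le> real n * real n * (d / (real n * real n + 1))"
    by (rule mult_left_mono[OF tau']) simp
  also have "\<dots> \<le> (real n * real n + 1) * (d / (real n * real n + 1))"
    by (rule mult_right_mono) (use d in auto)
  also have "\<dots> = d"
  proof -
    have "0 \<le> real n * real n" by simp
    then have pos: "real n * real n + 1 > 0" by linarith
    then show ?thesis by simp
  qed
  finally have t2: "(\<Sum>i<n. \<Sum>j<n. cmod (stail n X T' $$ (i,j))) \<le> d" .
  have "nb (msum n (\<lambda>m. sterm X (m + T)) (T' - T) + stail n X T') ((\<Sum>m<T' - T. sbeta K (m + T)) + (\<Sum>i<n. \<Sum>j<n. cmod (stail n X T' $$ (i,j))))"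
    by (rule nb_add[OF _ _ m1 t1]) auto
  then have "nb (stail n X T) ((\<Sum>m<T' - T. sbeta K (m + T)) + (\<Sum>i<n. \<Sum>j<n. cmod (stail n X T' $$ (i,j))))"
    using stail_split[OF X TT(1)] by simp
  then show "nb (stail n X T) (stau K T + d)"
    by (rule nb_mono) (use m2 t2 in linarith)
qed

definition sgam :: "real \<Rightarrow> nat \<Rightarrow> real" where
  "sgam K T = (\<Sum>m<T. of_nat (2 * m + 1) * K ^ (2 * m) / fact (2 * m + 1))"

lemma sum_odd: "(\<Sum>m<T. (2 * m + 1)) = T * (T :: nat)"
  by (induction T) auto

lemma sin_decomp:
  assumes X: "X \<in> carrier_mat n n" and Y: "Y \<in> carrier_mat n n" and L: "lowrank n r L"
    and S: "S \<in> carrier_mat n n" and XYLS: "X = Y + L + S"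
    and nS: "nb S \<eta>" and nX: "nb X K" and nY: "nb Y K" and K: "0 \<le> K" and eta: "0 \<le> \<eta>"
  shows "\<exists>R E. R \<in> carrier_mat n n \<and> E \<in> carrier_mat n n \<and> mat_sin X = mat_sin Y + R + E \<and>
     lowrank n (T0 * T0 * r) R \<and> nb E (\<eta> * sgam K T0 + 2 * stau K T0)"
proof -
  have ex: "\<forall>m. \<exists>LS. X ^\<^sub>m (2 * m + 1) = Y ^\<^sub>m (2 * m + 1) + fst LS + snd LS \<and> lowrank n ((2 * m + 1) * r) (fst LS)
     \<and> snd LS \<in> carrier_mat n n \<and> nb (snd LS) (of_nat (2 * m + 1) * K ^ (2 * m) * \<eta>)"
  proof
    fix m
    from pow_decomp[OF X Y L S XYLS nS nX nY K eta, of "2 * m + 1"]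
    obtain Lk Sk where "X ^\<^sub>m (2 * m + 1) = Y ^\<^sub>m (2 * m + 1) + Lk + Sk" "lowrank n ((2 * m + 1) * r) Lk"
      "Sk \<in> carrier_mat n n" "nb Sk (of_nat (2 * m + 1) * K ^ (2 * m) * \<eta>)" by auto
    then show "\<exists>LS. X ^\<^sub>m (2 * m + 1) = Y ^\<^sub>m (2 * m + 1) + fst LS + snd LS \<and> lowrank n ((2 * m + 1) * r) (fst LS)
     \<and> snd LS \<in> carrier_mat n n \<and> nb (snd LS) (of_nat (2 * m + 1) * K ^ (2 * m) * \<eta>)"
      by (intro exI[of _ "(Lk, Sk)"]) auto
  qed
  obtain LS where LS: "\<And>m. X ^\<^sub>m (2 * m + 1) = Y ^\<^sub>m (2 * m + 1) + fst (LS m) + snd (LS m)"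
    "\<And>m. lowrank n ((2 * m + 1) * r) (fst (LS m))" "\<And>m. snd (LS m) \<in> carrier_mat n n"
    "\<And>m. nb (snd (LS m)) (of_nat (2 * m + 1) * K ^ (2 * m) * \<eta>)"
    using choice[OF ex] by blast
  define LR where "LR m = scoef m \<cdot>\<^sub>m fst (LS m)" for m
  define SR where "SR m = scoef m \<cdot>\<^sub>m snd (LS m)" for m
  have LRc: "LR m \<in> carrier_mat n n" for m unfolding LR_def using lowrank_carrier[OF LS(2)] by simp
  have SRc: "SR m \<in> carrier_mat n n" for m unfolding SR_def using LS(3) by simp
  have Gc: "sterm Y m \<in> carrier_mat n n" for m using Y by simp
  have st: "sterm X m = sterm Y m + LR m + SR m" for m
  proof (rule eq_matI)
    fix i j assume "i < dim_row (sterm Y m + LR m + SR m)" "j < dim_col (sterm Y m + LR m + SR m)"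
    then have i: "i < n" and j: "j < n" using SRc[of m] by auto
    have Lm: "fst (LS m) \<in> carrier_mat n n" using lowrank_carrier[OF LS(2)] .
    define P where "P = Y ^\<^sub>m (2 * m + 1)"
    have Yp: "P \<in> carrier_mat n n" unfolding P_def by (rule pow_carrier_mat[OF Y])
    have Sm: "snd (LS m) \<in> carrier_mat n n" by (rule LS(3))
    show "sterm X m $$ (i,j) = (sterm Y m + LR m + SR m) $$ (i,j)"
      unfolding sterm_def LR_def SR_def LS(1)[of m] P_def[symmetric]
      using i j Lm Yp Sm by (simp add: algebra_simps)
  qed (use X SRc[of m] in \<open>auto simp: sterm_def\<close>)
  have ms: "msum n (sterm X) T0 = msum n (sterm Y) T0 + msum n LR T0 + msum n SR T0"
  proof -
    have "sterm X = (\<lambda>m. sterm Y m + LR m + SR m)" using st by blast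
    then show ?thesis using msum_add3[of T0 "sterm Y" n LR SR] Gc LRc SRc by simp
  qed
  define R where "R = msum n LR T0"
  define E where "E = msum n SR T0 + stail n X T0 + (-1) \<cdot>\<^sub>m stail n Y T0"
  have sX: "mat_sin X = msum n (sterm X) T0 + stail n X T0" by (rule mat_sin_split[OF X nX K])
  have sY: "mat_sin Y = msum n (sterm Y) T0 + stail n Y T0" by (rule mat_sin_split[OF Y nY K])
  have eq: "mat_sin X = mat_sin Y + R + E"
  proof (rule eq_matI)
    fix i j assume "i < dim_row (mat_sin Y + R + E)" "j < dim_col (mat_sin Y + R + E)"
    then have i: "i < n" and j: "j < n" by (auto simp: E_def)
    have "mat_sin X $$ (i,j) = msum n (sterm Y) T0 $$ (i,j) + msum n LR T0 $$ (i,j) + msum n SR T0 $$ (i,j) + stail n X T0 $$ (i,j)"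
      unfolding sX ms using i j by simp
    moreover have "mat_sin Y $$ (i,j) = msum n (sterm Y) T0 $$ (i,j) + stail n Y T0 $$ (i,j)"
      unfolding sY using i j by simp
    ultimately show "mat_sin X $$ (i,j) = (mat_sin Y + R + E) $$ (i,j)"
      using i j Y by (simp add: R_def E_def)
  qed (use X Y in \<open>auto simp: E_def\<close>)
  have lr: "lowrank n (\<Sum>m<T0. (2 * m + 1) * r) R"
    unfolding R_def LR_def by (rule lowrank_msum) (rule lowrank_smult[OF LS(2)])
  have "(\<Sum>m<T0. (2 * m + 1) * r) = (\<Sum>m<T0. (2 * m + 1)) * r" by (rule sum_distrib_right[symmetric])
  also have "\<dots> = T0 * T0 * r" by (simp only: sum_odd)
  finally have "(\<Sum>m<T0. (2 * m + 1) * r) = T0 * T0 * r" .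
  then have lr': "lowrank n (T0 * T0 * r) R" using lr by simp
  have n1: "nb (msum n SR T0) (\<Sum>m<T0. cmod (scoef m) * (of_nat (2 * m + 1) * K ^ (2 * m) * \<eta>))"
  proof (rule nb_msum)
    fix m show "SR m \<in> carrier_mat n n" by (rule SRc)
    show "nb (SR m) (cmod (scoef m) * (of_nat (2 * m + 1) * K ^ (2 * m) * \<eta>))"
      unfolding SR_def by (rule nb_smult[OF LS(4)])
  qed
  have "(\<Sum>m<T0. cmod (scoef m) * (of_nat (2 * m + 1) * K ^ (2 * m) * \<eta>)) = \<eta> * sgam K T0"
    unfolding sgam_def cmod_scoef sum_distrib_left by (rule sum.cong[OF refl]) simp
  with n1 have n1': "nb (msum n SR T0) (\<eta> * sgam K T0)" by simp
  have n2: "nb (stail n X T0) (stau K T0)" by (rule nb_stail[OF X nX K])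
  have n3: "nb ((-1) \<cdot>\<^sub>m stail n Y T0) (cmod (-1) * stau K T0)" by (rule nb_smult[OF nb_stail[OF Y nY K]])
  have "nb E (\<eta> * sgam K T0 + stau K T0 + cmod (-1) * stau K T0)"
    unfolding E_def by (rule nb_add[OF _ _ nb_add[OF _ _ n1' n2] n3]) auto
  moreover have "\<eta> * sgam K T0 + stau K T0 + cmod (-1) * stau K T0 = \<eta> * sgam K T0 + 2 * stau K T0" by simp
  ultimately have nE: "nb E (\<eta> * sgam K T0 + 2 * stau K T0)" by metis
  show ?thesis
    by (intro exI[of _ R] exI[of _ E] conjI eq lr' nE) (auto simp: R_def E_def)
qed

definition fM :: "(complex \<times> int) list \<Rightarrow> nat" where "fM ps = sum_list (map (\<lambda>q. nat \<bar>snd q\<bar>) ps)"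
definition fB :: "(complex \<times> int) list \<Rightarrow> real" where "fB ps = sum_list (map (\<lambda>q. cmod (fst q)) ps)"

lemma fc_tpoly_zero: assumes "\<bar>d\<bar> > int (fM ps)" shows "fourier_coeff (tpoly ps) d = 0"
proof -
  have "\<forall>q\<in>set ps. snd q \<noteq> d"
  proof
    fix q assume q: "q \<in> set ps"
    have "nat \<bar>snd q\<bar> \<le> fM ps" unfolding fM_def
      by (rule member_le_sum_list) (use q in auto)
    then show "snd q \<noteq> d" using assms by auto
  qed
  then have "(\<Sum>p\<leftarrow>ps. if snd p = d then fst p else 0) = 0"
    by (induction ps) auto
  then show ?thesis by (simp add: fourier_coeff_tpoly)
qed

lemma fc_tpoly_bound: "cmod (fourier_coeff (tpoly ps) d) \<le> fB ps"
proof -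
  have "cmod (\<Sum>p\<leftarrow>ps. if snd p = d then fst p else 0) \<le> fB ps"
  proof (induction ps)
    case Nil then show ?case by (simp add: fB_def)
  next
    case (Cons p ps)
    have "cmod ((if snd p = d then fst p else 0) + (\<Sum>p\<leftarrow>ps. if snd p = d then fst p else 0))
       \<le> cmod (if snd p = d then fst p else 0) + cmod (\<Sum>p\<leftarrow>ps. if snd p = d then fst p else 0)"
      by (rule norm_triangle_ineq)
    also have "\<dots> \<le> cmod (fst p) + fB ps" using Cons by (intro add_mono) auto
    finally show ?case by (simp add: fB_def)
  qed
  then show ?thesis by (simp add: fourier_coeff_tpoly)
qed

lemma fB_nonneg: "0 \<le> fB ps"
  unfolding fB_def by (induction ps) auto

lemma opt_circ_coeff_mod_nonneg:
  assumes "0 < n" "0 \<le> d" "d < int n"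
  shows "(d mod int n) = d"
  using assms by simp

definition Dp :: "(complex \<times> int) list \<Rightarrow> nat \<Rightarrow> nat \<Rightarrow> nat \<Rightarrow> complex" where
  "Dp ps n j k = fourier_coeff (tpoly ps) (int j - int k) - opt_circ_coeff (tpoly ps) n ((int j - int k) mod int n)"

definition band :: "(complex \<times> int) list \<Rightarrow> nat \<Rightarrow> complex mat" where
  "band ps n = mat n n (\<lambda>(j,k). if \<bar>int j - int k\<bar> \<le> int (fM ps) then Dp ps n j k else 0)"

definition corner :: "(complex \<times> int) list \<Rightarrow> nat \<Rightarrow> complex mat" where
  "corner ps n = mat n n (\<lambda>(j,k). if \<bar>int j - int k\<bar> \<le> int (fM ps) then 0 else Dp ps n j k)"

lemma band_entry:
  assumes n: "2 * fM ps < n" and j: "j < n" and k: "k < n" and jk: "\<bar>int j - int k\<bar> \<le> int (fM ps)"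
  shows "cmod (Dp ps n j k) \<le> real (fM ps) * fB ps / real n"
proof -
  define a where "a = fourier_coeff (tpoly ps)"
  define M where "M = fM ps"
  have n0: "0 < n" using n by simp
  have nR: "(of_nat n :: complex) \<noteq> 0" using n0 by simp
  have ab: "cmod (a x) \<le> fB ps" for x unfolding a_def by (rule fc_tpoly_bound)
  show ?thesis
  proof (cases "k \<le> j")
    case True
    define d where "d = j - k"
    have dd: "int j - int k = int d" using True by (simp add: d_def)
    have dM: "d \<le> M" using jk dd by (simp add: M_def)
    have dn: "d < n" using dM n by (simp add: M_def)
    have mod: "int d mod int n = int d" using dn by simp
    have z: "a (int d - int n) = 0" unfolding a_def
      by (rule fc_tpoly_zero) (use dM n in \<open>simp add: M_def\<close>)
    have "Dp ps n j k = a (int d) - ((of_int (int n - int d)) * a (int d) + of_int (int d) * a (int d - int n)) / of_nat n"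
      unfolding Dp_def opt_circ_coeff_def dd mod a_def ..
    also have "\<dots> = of_nat d * a (int d) / of_nat n"
      using nR dn by (simp add: z field_simps of_nat_diff)
    finally have e: "Dp ps n j k = of_nat d * a (int d) / of_nat n" .
    have "cmod (Dp ps n j k) = real d * cmod (a (int d)) / real n" unfolding e by (simp add: norm_mult norm_divide)
    also have "\<dots> \<le> real M * fB ps / real n"
      by (intro divide_right_mono mult_mono) (use dM ab in \<open>auto simp: fB_nonneg\<close>)
    finally show ?thesis by (simp add: M_def)
  next
    case False
    define d where "d = k - j"
    have dd: "int j - int k = - int d" using False by (simp add: d_def)
    have dM: "d \<le> M" using jk dd by (simp add: M_def)
    have d0: "0 < d" using False by (simp add: d_def)
    have dn: "d < n" using dM n by (simp add: M_def)
    have mod: "(- int d) mod int n = int n - int d"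
    proof -
      have "(- int d) mod int n = (- int d + int n) mod int n" by simp
      also have "- int d + int n = int n - int d" by simp
      also have "(int n - int d) mod int n = int n - int d" by (rule mod_pos_pos_trivial) (use dn d0 in auto)
      finally show ?thesis .
    qed
    have z: "a (int n - int d) = 0" unfolding a_def
      by (rule fc_tpoly_zero) (use dM n in \<open>simp add: M_def\<close>)
    have "Dp ps n j k = a (- int d) - ((of_int (int n - (int n - int d))) * a (int n - int d) + of_int (int n - int d) * a (int n - int d - int n)) / of_nat n"
      unfolding Dp_def opt_circ_coeff_def dd mod a_def ..
    also have "\<dots> = of_nat d * a (- int d) / of_nat n"
      using nR dn by (simp add: z field_simps of_nat_diff)
    finally have e: "Dp ps n j k = of_nat d * a (- int d) / of_nat n" .
    have "cmod (Dp ps n j k) = real d * cmod (a (- int d)) / real n" unfolding e by (simp add: norm_mult norm_divide)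
    also have "\<dots> \<le> real M * fB ps / real n"
      by (intro divide_right_mono mult_mono) (use dM ab in \<open>auto simp: fB_nonneg\<close>)
    finally show ?thesis by (simp add: M_def)
  qed
qed

lemma corner_entry:
  assumes n: "2 * fM ps < n" and j: "j < n" and k: "k < n" and jk: "\<bar>int j - int k\<bar> > int (fM ps)"
    and kM: "fM ps \<le> k" "k < n - fM ps"
  shows "Dp ps n j k = 0"
proof -
  define a where "a = fourier_coeff (tpoly ps)"
  define M where "M = fM ps"
  have z0: "a (int j - int k) = 0" unfolding a_def by (rule fc_tpoly_zero[OF jk])
  show ?thesis
  proof (cases "k \<le> j")
    case True
    define d where "d = j - k"
    have dd: "int j - int k = int d" using True by (simp add: d_def)
    have dn: "d < n" using j by (simp add: d_def)
    have mod: "int d mod int n = int d" using dn by simp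
    have z1: "a (int d) = 0" using z0 dd by simp
    have z2: "a (int d - int n) = 0" unfolding a_def
      by (rule fc_tpoly_zero) (use kM j in \<open>simp add: d_def\<close>)
    show ?thesis unfolding Dp_def opt_circ_coeff_def dd mod a_def[symmetric] z1 z2 by simp
  next
    case False
    define d where "d = k - j"
    have dd: "int j - int k = - int d" using False by (simp add: d_def)
    have d0: "0 < d" using False by (simp add: d_def)
    have dn: "d < n" using k by (simp add: d_def)
    have mod: "(- int d) mod int n = int n - int d"
    proof -
      have "(- int d) mod int n = (- int d + int n) mod int n" by simp
      also have "- int d + int n = int n - int d" by simp
      also have "(int n - int d) mod int n = int n - int d" by (rule mod_pos_pos_trivial) (use dn d0 in auto)
      finally show ?thesis .
    qed
    have z1: "a (- int d) = 0" using z0 dd by simp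
    have z2: "a (int n - int d) = 0" unfolding a_def
      by (rule fc_tpoly_zero) (use kM j False in \<open>simp add: d_def\<close>)
    have z3: "a (int n - int d - int n) = 0" using z1 by simp
    show ?thesis unfolding Dp_def opt_circ_coeff_def dd mod a_def[symmetric] z1 z2 z3 by simp
  qed
qed

lemma band_carrier[simp]: "band ps n \<in> carrier_mat n n" by (simp add: band_def)
lemma corner_carrier[simp]: "corner ps n \<in> carrier_mat n n" by (simp add: corner_def)

lemma card_near: "card {k. k < n \<and> \<bar>int j - int k\<bar> \<le> int M} \<le> 2 * M + 1"
proof -
  have "{k. k < n \<and> \<bar>int j - int k\<bar> \<le> int M} \<subseteq> {j - M .. j + M}" by auto
  then have "card {k. k < n \<and> \<bar>int j - int k\<bar> \<le> int M} \<le> card {j - M .. j + M}"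
    by (rule card_mono[rotated]) simp
  also have "\<dots> \<le> 2 * M + 1" by simp
  finally show ?thesis .
qed

lemma card_near': "card {j. j < n \<and> \<bar>int j - int k\<bar> \<le> int M} \<le> 2 * M + 1"
proof -
  have "{j. j < n \<and> \<bar>int j - int k\<bar> \<le> int M} = {j. j < n \<and> \<bar>int k - int j\<bar> \<le> int M}" by auto
  then show ?thesis using card_near[of n k M] by simp
qed

lemma sum_near1: fixes \<beta> :: real assumes b: "0 \<le> \<beta>"
  shows "(\<Sum>k<n. if \<bar>int j - int k\<bar> \<le> int M then \<beta> else 0) \<le> real (2 * M + 1) * \<beta>"
proof -
  have "(\<Sum>k<n. if \<bar>int j - int k\<bar> \<le> int M then \<beta> else 0) = (\<Sum>k\<in>{k. k < n \<and> \<bar>int j - int k\<bar> \<le> int M}. \<beta>)"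
    by (rule sum.mono_neutral_cong_right) auto
  also have "\<dots> = real (card {k. k < n \<and> \<bar>int j - int k\<bar> \<le> int M}) * \<beta>" by simp
  also have "\<dots> \<le> real (2 * M + 1) * \<beta>" by (rule mult_right_mono[OF _ b]) (use card_near[of n j M] in linarith)
  finally show ?thesis .
qed

lemma sum_near2: fixes \<beta> :: real assumes b: "0 \<le> \<beta>"
  shows "(\<Sum>k<n. if \<bar>int k - int j\<bar> \<le> int M then \<beta> else 0) \<le> real (2 * M + 1) * \<beta>"
proof -
  have "(\<Sum>k<n. if \<bar>int k - int j\<bar> \<le> int M then \<beta> else 0) = (\<Sum>k\<in>{k. k < n \<and> \<bar>int k - int j\<bar> \<le> int M}. \<beta>)"
    by (rule sum.mono_neutral_cong_right) auto
  also have "\<dots> = real (card {k. k < n \<and> \<bar>int k - int j\<bar> \<le> int M}) * \<beta>" by simp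
  also have "\<dots> \<le> real (2 * M + 1) * \<beta>" by (rule mult_right_mono[OF _ b]) (use card_near'[of n j M] in linarith)
  finally show ?thesis .
qed

lemma band_nb: assumes n: "2 * fM ps < n"
  shows "nb (band ps n) ((2 * fM ps + 1) * (real (fM ps) * fB ps / real n))"
proof -
  define \<beta> where "\<beta> = real (fM ps) * fB ps / real n"
  have b0: "0 \<le> \<beta>" unfolding \<beta>_def by (simp add: fB_nonneg)
  have ent: "cmod (band ps n $$ (j,k)) \<le> (if \<bar>int j - int k\<bar> \<le> int (fM ps) then \<beta> else 0)" if "j < n" "k < n" for j k
    using that band_entry[OF n that] by (simp add: band_def \<beta>_def)
  show ?thesis unfolding \<beta>_def[symmetric]
  proof (rule nb_schur)
    show "band ps n \<in> carrier_mat n n" by simp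
    show "0 \<le> (2 * fM ps + 1) * \<beta>" using b0 by simp
    fix i assume i: "i < n"
    have "(\<Sum>j<n. cmod (band ps n $$ (i,j))) \<le> (\<Sum>j<n. if \<bar>int i - int j\<bar> \<le> int (fM ps) then \<beta> else 0)"
      by (rule sum_mono) (use ent i in auto)
    also have "\<dots> \<le> (2 * fM ps + 1) * \<beta>" by (rule sum_near1[OF b0])
    finally show "(\<Sum>j<n. cmod (band ps n $$ (i,j))) \<le> (2 * fM ps + 1) * \<beta>" .
  next
    fix j assume j: "j < n"
    have "(\<Sum>i<n. cmod (band ps n $$ (i,j))) \<le> (\<Sum>i<n. if \<bar>int i - int j\<bar> \<le> int (fM ps) then \<beta> else 0)"
      by (rule sum_mono) (use ent j in auto)
    also have "\<dots> \<le> (2 * fM ps + 1) * \<beta>" by (rule sum_near2[OF b0])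
    finally show "(\<Sum>i<n. cmod (band ps n $$ (i,j))) \<le> (2 * fM ps + 1) * \<beta>" .
  qed
qed

lemma cols_lowrank:
  assumes R: "R \<in> carrier_mat n n" and ks: "distinct ks" "set ks \<subseteq> {..<n}"
    and z: "\<And>i k. i < n \<Longrightarrow> k < n \<Longrightarrow> k \<notin> set ks \<Longrightarrow> R $$ (i,k) = 0"
  shows "lowrank n (length ks) R"
proof -
  define ps where "ps = map (\<lambda>k. (\<lambda>i. R $$ (i,k), \<lambda>j. if j = k then 1 else 0 :: complex)) ks"
  have "R = osum n ps"
  proof (rule eq_matI)
    fix i j assume "i < dim_row (osum n ps)" "j < dim_col (osum n ps)"
    then have i: "i < n" and j: "j < n" by auto
    have "osum n ps $$ (i,j) = (\<Sum>k\<leftarrow>ks. R $$ (i,k) * (if j = k then 1 else 0))"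
      using i j by (simp add: osum_index ps_def o_def)
    also have "\<dots> = (\<Sum>k\<in>set ks. R $$ (i,k) * (if j = k then 1 else 0))"
      by (rule sum_list_distinct_conv_sum_set[OF ks(1)])
    also have "\<dots> = (if j \<in> set ks then R $$ (i,j) else 0)"
      by (simp add: if_distrib[of "\<lambda>x. _ * x"] sum.delta cong: if_cong)
    also have "\<dots> = R $$ (i,j)" using z[OF i j] by auto
    finally show "R $$ (i,j) = osum n ps $$ (i,j)" ..
  qed (use R in auto)
  then show ?thesis unfolding lowrank_def by (intro exI[of _ ps]) (simp add: ps_def)
qed

lemma corner_lowrank: assumes n: "2 * fM ps < n" shows "lowrank n (2 * fM ps) (corner ps n)"
proof -
  define M where "M = fM ps"
  define ks where "ks = [0..<M] @ [n - M..<n]"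
  have d: "distinct ks" using n by (auto simp: ks_def M_def)
  have l: "length ks = 2 * M" using n by (simp add: ks_def M_def)
  have s: "set ks \<subseteq> {..<n}" using n by (auto simp: ks_def M_def)
  have "lowrank n (length ks) (corner ps n)"
  proof (rule cols_lowrank[OF corner_carrier d s])
    fix i k assume i: "i < n" and k: "k < n" and nk: "k \<notin> set ks"
    then have kM: "fM ps \<le> k" "k < n - fM ps" by (auto simp: ks_def M_def)
    show "corner ps n $$ (i,k) = 0"
    proof (cases "\<bar>int i - int k\<bar> \<le> int (fM ps)")
      case True then show ?thesis using i k by (simp add: corner_def)
    next
      case False
      then have "Dp ps n i k = 0" by (intro corner_entry[OF n i k] kM) simp
      then show ?thesis using i k by (simp add: corner_def)
    qed
  qed
  then show ?thesis using l by (simp add: M_def)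
qed

lemma toeplitz_decomp:
  fixes f :: "real \<Rightarrow> complex"
  assumes cf: "continuous_on UNIV f" and ap: "\<And>\<theta>. \<theta> \<in> {-pi..pi} \<Longrightarrow> cmod (f \<theta> - tpoly ps \<theta>) \<le> \<delta>"
    and n: "2 * fM ps < n"
  shows "\<exists>S. S \<in> carrier_mat n n \<and> toeplitz_mat f n = opt_circ f n + corner ps n + S \<and>
          nb S (2 * \<delta> + real (2 * fM ps + 1) * (real (fM ps) * fB ps / real n))"
proof -
  define g where "g \<theta> = f \<theta> - tpoly ps \<theta>" for \<theta>
  have cf': "continuous_on {-pi..pi} f" using cf by (rule continuous_on_subset) simp
  have cp: "continuous_on {-pi..pi} (tpoly ps)" by (rule continuous_on_tpoly)
  have cg: "continuous_on {-pi..pi} g" unfolding g_def by (intro continuous_on_diff cf' cp)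
  have d0: "0 \<le> \<delta>" using ap[of 0] pi_ge_zero by (meson atLeastAtMost_iff neg_le_0_iff_le norm_ge_zero order_trans)
  have afg: "fourier_coeff f k = fourier_coeff (tpoly ps) k + fourier_coeff g k" for k
    using fourier_coeff_diff[OF cf' cp, of k] unfolding g_def[symmetric] by simp
  have ofg: "opt_circ_coeff f n e = opt_circ_coeff (tpoly ps) n e + opt_circ_coeff g n e" for e
    unfolding opt_circ_coeff_def afg by (simp add: add_divide_distrib[symmetric] algebra_simps)
  define S where "S = toeplitz_mat g n + (-1) \<cdot>\<^sub>m opt_circ g n + band ps n"
  have Sc: "S \<in> carrier_mat n n" unfolding S_def by simp
  have eq: "toeplitz_mat f n = opt_circ f n + corner ps n + S"
  proof (rule eq_matI)
    fix j k assume "j < dim_row (opt_circ f n + corner ps n + S)" "k < dim_col (opt_circ f n + corner ps n + S)"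
    then have j: "j < n" and k: "k < n" using Sc by auto
    have "(opt_circ f n + corner ps n + S) $$ (j,k) =
        opt_circ_coeff (tpoly ps) n ((int j - int k) mod int n) + opt_circ_coeff g n ((int j - int k) mod int n)
        + (if \<bar>int j - int k\<bar> \<le> int (fM ps) then 0 else Dp ps n j k)
        + (fourier_coeff g (int j - int k) - opt_circ_coeff g n ((int j - int k) mod int n)
           + (if \<bar>int j - int k\<bar> \<le> int (fM ps) then Dp ps n j k else 0))"
      using j k Sc by (simp add: S_def opt_circ_index toeplitz_index ofg corner_def band_def)
    also have "\<dots> = fourier_coeff f (int j - int k)"
      unfolding afg Dp_def by simp
    finally show "toeplitz_mat f n $$ (j,k) = (opt_circ f n + corner ps n + S) $$ (j,k)"
      using j k by (simp add: toeplitz_index)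
  qed (use Sc in auto)
  have nT: "nb (toeplitz_mat g n) \<delta>" by (rule toeplitz_nb[OF cg]) (use ap in \<open>simp add: g_def\<close>)
  have nC: "nb (opt_circ g n) \<delta>" by (rule circ_nb[OF nT d0])
  have nC': "nb ((-1) \<cdot>\<^sub>m opt_circ g n) (cmod (-1) * \<delta>)" by (rule nb_smult[OF nC])
  have nS: "nb S (\<delta> + cmod (-1) * \<delta> + real (2 * fM ps + 1) * (real (fM ps) * fB ps / real n))"
    unfolding S_def by (rule nb_add[OF _ _ nb_add[OF _ _ nT nC'] band_nb[OF n]]) auto
  have "\<delta> + cmod (-1) * \<delta> + real (2 * fM ps + 1) * (real (fM ps) * fB ps / real n) =
      2 * \<delta> + real (2 * fM ps + 1) * (real (fM ps) * fB ps / real n)" by simp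
  then show ?thesis using Sc eq nS by (intro exI[of _ S]) auto
qed

lemma mat_inv_props:
  assumes inv: "invertible_mat A" and A: "A \<in> carrier_mat n n"
  shows "mat_inv A \<in> carrier_mat n n" "mat_inv A * A = 1\<^sub>m n"
proof -
  obtain B where AB: "inverts_mat A B" "inverts_mat B A" using inv unfolding invertible_mat_def by blast
  have 1: "A * B = 1\<^sub>m n" using AB(1) A unfolding inverts_mat_def by simp
  have 2: "B * A = 1\<^sub>m (dim_row B)" using AB(2) unfolding inverts_mat_def by simp
  have "dim_col B = n" using arg_cong[OF 1, of dim_col] by simp
  moreover have "dim_row B = n" using arg_cong[OF 2, of dim_col] A by simp
  ultimately have Bc: "B \<in> carrier_mat n n" by auto
  have 3: "B * A = 1\<^sub>m n" using 2 Bc by simp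
  have "\<exists>B. B \<in> carrier_mat (dim_row A) (dim_row A) \<and> A * B = 1\<^sub>m (dim_row A) \<and> B * A = 1\<^sub>m (dim_row A)"
    using Bc 1 3 A by (intro exI[of _ B]) auto
  from someI_ex[OF this] have "mat_inv A \<in> carrier_mat (dim_row A) (dim_row A) \<and> A * mat_inv A = 1\<^sub>m (dim_row A) \<and> mat_inv A * A = 1\<^sub>m (dim_row A)"
    unfolding mat_inv_def .
  then show "mat_inv A \<in> carrier_mat n n" "mat_inv A * A = 1\<^sub>m n" using A by auto
qed

lemma sgam_nonneg: "0 \<le> K \<Longrightarrow> 0 \<le> sgam K T"
  unfolding sgam_def by (intro sum_nonneg) auto

theorem mainTheorem6:
  fixes f :: "real \<Rightarrow> complex" and C :: real
  assumes cont: "continuous_on UNIV f"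
    and per: "\<And>x. f (x + 2 * pi) = f x"
    and inv: "\<And>n. invertible_mat (mat_sin (opt_circ f n))"
    and bnd: "\<And>n. spec_norm (mat_inv (mat_sin (opt_circ f n))) \<le> C"
  shows "\<forall>\<epsilon>>0. \<exists>N M :: nat. N > 0 \<and> M > 0 \<and>
           (\<forall>n>N. \<exists>R E. R \<in> carrier_mat n n \<and> E \<in> carrier_mat n n \<and>
              mat_inv (mat_sin (opt_circ f n)) * mat_sin (toeplitz_mat f n) = 1\<^sub>m n + R + E \<and>
              cmat_rank R \<le> 2 * M \<and> spec_norm E \<le> \<epsilon>)"
proof (intro allI impI)
  fix \<epsilon> :: real assume e: "\<epsilon> > 0"
  have cf': "continuous_on {-pi..pi} f" using cont by (rule continuous_on_subset) simp
  obtain K where K: "K > 0" "\<And>x. x \<in> {-pi..pi} \<Longrightarrow> cmod (f x) \<le> K"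
    using compact_imp_bounded[OF compact_continuous_image[OF cf' compact_Icc]] by (auto simp: bounded_pos)
  have K0: "0 \<le> K" using K by simp
  have nX: "nb (toeplitz_mat f n) K" for n by (rule toeplitz_nb[OF cf' K(2)])
  have nY: "nb (opt_circ f n) K" for n by (rule circ_nb[OF nX K0])
  have C0: "0 \<le> C" using spec_norm_nonneg bnd[of 0] by (rule order_trans)
  have nW: "nb (mat_inv (mat_sin (opt_circ f n))) C" for n
    by (rule nb_mono[OF nb_spec_norm bnd])
  define r where "r = \<epsilon> / (4 * (C + 1))"
  have r0: "0 < r" unfolding r_def using e C0 by simp
  obtain T0 where T0: "\<And>T. T0 \<le> T \<Longrightarrow> norm (\<Sum>i. sbeta K (i + T)) < r"
    using suminf_exist_split[OF r0 summable_sbeta[OF K0]] by blast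
  have tau: "stau K T0 \<le> r" using T0[of T0] stau_nonneg[OF K0, of T0] unfolding stau_def by simp
  define \<Gamma> where "\<Gamma> = sgam K T0"
  have G0: "0 \<le> \<Gamma>" unfolding \<Gamma>_def by (rule sgam_nonneg[OF K0])
  define \<eta> where "\<eta> = \<epsilon> / (2 * (C + 1) * (\<Gamma> + 1))"
  have eta0: "0 < \<eta>" unfolding \<eta>_def using e C0 G0 by (simp add: add_nonneg_pos)
  define \<delta> where "\<delta> = \<eta> / 4"
  have d0: "0 < \<delta>" unfolding \<delta>_def using eta0 by simp
  obtain ps where ps: "\<forall>\<theta>\<in>{-pi..pi}. cmod (f \<theta> - tpoly ps \<theta>) \<le> \<delta>"
    using trig_approx[OF cont per d0] by blast
  define M0 where "M0 = fM ps"
  define B0 where "B0 = fB ps"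
  have B00: "0 \<le> B0" unfolding B0_def by (rule fB_nonneg)
  define N where "N = 2 * M0 + nat \<lceil>2 * (2 * M0 + 1) * M0 * B0 / \<eta>\<rceil> + 1"
  define M where "M = T0 * T0 * M0 + 1"
  show "\<exists>N M :: nat. N > 0 \<and> M > 0 \<and>
           (\<forall>n>N. \<exists>R E. R \<in> carrier_mat n n \<and> E \<in> carrier_mat n n \<and>
              mat_inv (mat_sin (opt_circ f n)) * mat_sin (toeplitz_mat f n) = 1\<^sub>m n + R + E \<and>
              cmat_rank R \<le> 2 * M \<and> spec_norm E \<le> \<epsilon>)"
  proof -
  have main: "\<forall>n>N. \<exists>R E. R \<in> carrier_mat n n \<and> E \<in> carrier_mat n n \<and>
              mat_inv (mat_sin (opt_circ f n)) * mat_sin (toeplitz_mat f n) = 1\<^sub>m n + R + E \<and>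
              cmat_rank R \<le> 2 * M \<and> spec_norm E \<le> \<epsilon>"
  proof (intro allI impI)
    fix n assume nN: "N < n"
    have n2: "2 * fM ps < n" using nN by (simp add: N_def M0_def)
    have npos: "0 < n" using n2 by simp
    have bandb: "real (2 * fM ps + 1) * (real (fM ps) * fB ps / real n) \<le> \<eta> / 2"
    proof -
      have "2 * (2 * M0 + 1) * M0 * B0 / \<eta> \<le> real n"
      proof -
        have "2 * (2 * M0 + 1) * M0 * B0 / \<eta> \<le> of_int \<lceil>2 * (2 * M0 + 1) * M0 * B0 / \<eta>\<rceil>" by (rule le_of_int_ceiling)
        also have "\<dots> \<le> real (nat \<lceil>2 * (2 * M0 + 1) * M0 * B0 / \<eta>\<rceil>)" by linarith
        also have "\<dots> \<le> real n" using nN unfolding N_def by linarith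
        finally show ?thesis .
      qed
      then have "2 * (2 * M0 + 1) * M0 * B0 \<le> real n * \<eta>" using eta0 by (simp add: divide_le_eq)
      then have "real (2 * M0 + 1) * (real M0 * B0) \<le> \<eta> / 2 * real n" by (simp add: algebra_simps)
      then have "real (2 * M0 + 1) * (real M0 * B0) / real n \<le> \<eta> / 2" using npos by (simp add: divide_le_eq)
      then show ?thesis by (simp add: M0_def B0_def)
    qed
    obtain S where S: "S \<in> carrier_mat n n" "toeplitz_mat f n = opt_circ f n + corner ps n + S"
      "nb S (2 * \<delta> + real (2 * fM ps + 1) * (real (fM ps) * fB ps / real n))"
      using toeplitz_decomp[OF cont _ n2, of \<delta>] ps by blast
    have nS: "nb S \<eta>" by (rule nb_mono[OF S(3)]) (use bandb in \<open>unfold \<delta>_def, linarith\<close>)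
    obtain R E where RE: "R \<in> carrier_mat n n" "E \<in> carrier_mat n n"
      "mat_sin (toeplitz_mat f n) = mat_sin (opt_circ f n) + R + E"
      "lowrank n (T0 * T0 * (2 * fM ps)) R" "nb E (\<eta> * sgam K T0 + 2 * stau K T0)"
      using sin_decomp[OF toeplitz_carrier opt_circ_carrier corner_lowrank[OF n2] S(1) S(2) nS nX nY K0 less_imp_le[OF eta0], of T0]
      by blast
    define W where "W = mat_inv (mat_sin (opt_circ f n))"
    have sYc: "mat_sin (opt_circ f n) \<in> carrier_mat n n" by simp
    have Wc: "W \<in> carrier_mat n n" and WY: "W * mat_sin (opt_circ f n) = 1\<^sub>m n"
      using mat_inv_props[OF inv sYc] unfolding W_def by auto
    have eq: "W * mat_sin (toeplitz_mat f n) = 1\<^sub>m n + W * R + W * E"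
    proof -
      have "W * mat_sin (toeplitz_mat f n) = W * (mat_sin (opt_circ f n) + R) + W * E"
        unfolding RE(3) by (rule mult_add_distrib_mat[OF Wc _ RE(2)]) (use sYc RE(1) in simp)
      also have "W * (mat_sin (opt_circ f n) + R) = W * mat_sin (opt_circ f n) + W * R"
        by (rule mult_add_distrib_mat[OF Wc sYc RE(1)])
      finally show ?thesis unfolding WY .
    qed
    have lr: "lowrank n (T0 * T0 * (2 * fM ps)) (W * R)" by (rule lowrank_mult_left[OF Wc RE(4)])
    have rk: "cmat_rank (W * R) \<le> 2 * M"
      using lowrank_rank[OF lr] by (simp add: M_def M0_def)
    have nWE: "nb (W * E) (C * (\<eta> * sgam K T0 + 2 * stau K T0))"
      by (rule nb_mult[OF Wc RE(2) nW[of n, folded W_def] RE(5) C0])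
    have bnd1: "C * (\<eta> * \<Gamma>) \<le> \<epsilon> / 2"
    proof -
      have "C * (\<eta> * \<Gamma>) = \<epsilon> / 2 * ((C / (C + 1)) * (\<Gamma> / (\<Gamma> + 1)))"
        unfolding \<eta>_def using C0 G0 by (simp add: field_simps)
      also have "\<dots> \<le> \<epsilon> / 2 * (1 * 1)"
        using e C0 G0 by (intro mult_left_mono mult_mono) (auto simp: divide_le_eq)
      finally show ?thesis by simp
    qed
    have bnd2: "C * (2 * stau K T0) \<le> \<epsilon> / 2"
    proof -
      have "C * (2 * stau K T0) \<le> C * (2 * r)" using tau C0 by (intro mult_left_mono) auto
      also have "\<dots> = \<epsilon> / 2 * (C / (C + 1))" unfolding r_def using C0 by (simp add: field_simps)
      also have "\<dots> \<le> \<epsilon> / 2 * 1" using e C0 by (intro mult_left_mono) (auto simp: divide_le_eq)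
      finally show ?thesis by simp
    qed
    have "spec_norm (W * E) \<le> C * (\<eta> * sgam K T0 + 2 * stau K T0)"
      by (rule spec_norm_le[OF nWE]) (use C0 eta0 G0 stau_nonneg[OF K0, of T0] in \<open>simp add: \<Gamma>_def\<close>)
    also have "\<dots> \<le> \<epsilon>" using bnd1 bnd2 unfolding \<Gamma>_def by (simp add: distrib_left)
    finally have sn: "spec_norm (W * E) \<le> \<epsilon>" .
    show "\<exists>R E. R \<in> carrier_mat n n \<and> E \<in> carrier_mat n n \<and>
              mat_inv (mat_sin (opt_circ f n)) * mat_sin (toeplitz_mat f n) = 1\<^sub>m n + R + E \<and>
              cmat_rank R \<le> 2 * M \<and> spec_norm E \<le> \<epsilon>"
      using Wc RE(1,2) eq rk sn unfolding W_def[symmetric]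
      by (intro exI[of _ "W * R"] exI[of _ "W * E"]) auto
  qed
  then show ?thesis by (intro exI[of _ N] exI[of _ M]) (simp add: N_def M_def)
  qed
qed

end
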